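(* Let $G$ be a finite group and $p$ a prime dividing $|G|$. If $\mathcal{A}_p(G)\subseteq\mathcal{S}_p(G)$ is a strong deformation retract, then both $\mathcal{A}_p(G)'/G$ and $\mathcal{S}_p(G)'/G$ are contractible finite spaces. In particular, this holds when the Sylow $p$-subgroups of $G$ are abelian. Moreover, in the latter case $\mathcal{B}_p(G)\subseteq\mathcal{S}_p(G)$ is a strong deformation retract and $\mathcal{B}_p(G)'/G$ is a contractible finite space.
   Context: $\mathcal{S}_p(G)$ is the poset of non-trivial $p$-subgroups of $G$, $\mathcal{A}_p(G)$ its subposet of non-trivial elementary abelian $p$-subgroups, and $\mathcal{B}_p(G)=\{P\in\mathcal{S}_p(G):P=\mathcal{O}_p(N_G(P))\}$ the $p$-radical subgroups ($\mathcal{O}_p(H)$ = largest normal $p$-subgroup of $H$). $G$ acts by conjugation. Finite posets are finite $T_0$ spaces with open sets the down-sets; contractibility and strong deformation retracts refer to this topology. For a poset $X$, $X'$ is the poset of non-empty chains ordered by inclusion, with $G$ acting componentwise; $X'/G$ is the orbit poset with $\overline{c}\le\overline{d}$ iff some representatives satisfy $c_1\subseteq d_1$. *)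

theory Defs
  imports "HOL-Analysis.Analysis" "HOL-Algebra.Group_Action" "HOL-Algebra.Sylow"
begin

definition poset_topology :: "'a set \<Rightarrow> ('a \<Rightarrow> 'a \<Rightarrow> bool) \<Rightarrow> 'a topology" where
  "poset_topology X rel =
     topology (\<lambda>U. U \<subseteq> X \<and> (\<forall>x\<in>U. \<forall>y\<in>X. rel y x \<longrightarrow> y \<in> U))"

definition strong_deformation_retract :: "'a topology \<Rightarrow> 'a set \<Rightarrow> bool" where
  "strong_deformation_retract T A \<longleftrightarrow>
     A \<subseteq> topspace T \<and>
     (\<exists>r. continuous_map T (subtopology T A) r \<and> (\<forall>x\<in>A. r x = x) \<and>
          homotopic_with (\<lambda>h. \<forall>x\<in>A. h x = x) T T id r)"

definition is_p_subgroup :: "('g, 'b) monoid_scheme \<Rightarrow> nat \<Rightarrow> 'g set \<Rightarrow> bool" where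
  "is_p_subgroup G p H \<longleftrightarrow> subgroup H G \<and> (\<exists>n. card H = p ^ n)"

definition Sp :: "('g, 'b) monoid_scheme \<Rightarrow> nat \<Rightarrow> 'g set set" where
  "Sp G p = {H. is_p_subgroup G p H \<and> H \<noteq> {\<one>\<^bsub>G\<^esub>}}"

definition Ap :: "('g, 'b) monoid_scheme \<Rightarrow> nat \<Rightarrow> 'g set set" where
  "Ap G p = {H \<in> Sp G p. (\<forall>x\<in>H. \<forall>y\<in>H. x \<otimes>\<^bsub>G\<^esub> y = y \<otimes>\<^bsub>G\<^esub> x) \<and>
                         (\<forall>x\<in>H. x [^]\<^bsub>G\<^esub> p = \<one>\<^bsub>G\<^esub>)}"

definition Op :: "('g, 'b) monoid_scheme \<Rightarrow> nat \<Rightarrow> 'g set \<Rightarrow> 'g set" where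
  "Op G p K = (THE Q. is_p_subgroup G p Q \<and> Q \<lhd> (G\<lparr>carrier := K\<rparr>) \<and>
       (\<forall>Q'. is_p_subgroup G p Q' \<and> Q' \<lhd> (G\<lparr>carrier := K\<rparr>) \<longrightarrow> Q' \<subseteq> Q))"

definition Bp :: "('g, 'b) monoid_scheme \<Rightarrow> nat \<Rightarrow> 'g set set" where
  "Bp G p = {P \<in> Sp G p. P = Op G p (normalizer G P)}"

definition conjugate :: "('g, 'b) monoid_scheme \<Rightarrow> 'g \<Rightarrow> 'g set \<Rightarrow> 'g set" where
  "conjugate G g H = g <#\<^bsub>G\<^esub> H #>\<^bsub>G\<^esub> inv\<^bsub>G\<^esub> g"

text \<open>X': non-empty chains of the poset (X, \<subseteq>).\<close>
definition chains_poset :: "'g set set \<Rightarrow> 'g set set set" where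
  "chains_poset X = {c. c \<noteq> {} \<and> c \<subseteq> X \<and> (\<forall>a\<in>c. \<forall>b\<in>c. a \<subseteq> b \<or> b \<subseteq> a)}"

definition chain_act :: "('g, 'b) monoid_scheme \<Rightarrow> 'g \<Rightarrow> 'g set set \<Rightarrow> 'g set set" where
  "chain_act G g c = conjugate G g ` c"

definition orbit_set :: "('g, 'b) monoid_scheme \<Rightarrow> 'g set set \<Rightarrow> 'g set set set set" where
  "orbit_set G X = {{chain_act G g c | g. g \<in> carrier G} | c. c \<in> chains_poset X}"

definition orbit_le :: "'g set set set \<Rightarrow> 'g set set set \<Rightarrow> bool" where
  "orbit_le o1 o2 \<longleftrightarrow> (\<exists>c\<in>o1. \<exists>d\<in>o2. c \<subseteq> d)"

definition orbit_space :: "('g, 'b) monoid_scheme \<Rightarrow> 'g set set \<Rightarrow> 'g set set set topology" where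
  "orbit_space G X = poset_topology (orbit_set G X) orbit_le"

definition subgroup_space :: "'g set set \<Rightarrow> 'g set topology" where
  "subgroup_space X = poset_topology X (\<subseteq>)"

definition sylow_p_subgroup :: "('g, 'b) monoid_scheme \<Rightarrow> nat \<Rightarrow> 'g set \<Rightarrow> bool" where
  "sylow_p_subgroup G p P \<longleftrightarrow> subgroup P G \<and> card P = p ^ multiplicity p (order G)"

end

theory Submission
  imports Defs "HOL-Algebra.Multiplicative_Group"
begin


lemma istopology_down:
  "istopology (\<lambda>U. U \<subseteq> X \<and> (\<forall>x\<in>U. \<forall>y\<in>X. rel y x \<longrightarrow> y \<in> U))"
  unfolding istopology_def
  apply (rule conjI)
   apply blast
  apply (intro allI impI)
  apply (rule conjI)
   apply blast
  apply (intro ballI impI)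
  apply (erule UnionE)
  apply (rule UnionI, assumption)
  apply blast
  done

lemma openin_poset:
  "openin (poset_topology X rel) U \<longleftrightarrow> U \<subseteq> X \<and> (\<forall>x\<in>U. \<forall>y\<in>X. rel y x \<longrightarrow> y \<in> U)"
  unfolding poset_topology_def using topology_inverse'[OF istopology_down[of X rel]] by simp

lemma topspace_poset: "topspace (poset_topology X rel) = X"
proof -
  have "openin (poset_topology X rel) X" by (simp add: openin_poset)
  then have "X \<subseteq> topspace (poset_topology X rel)" by (simp add: openin_subset)
  moreover have "topspace (poset_topology X rel) \<subseteq> X"
    unfolding topspace_def by (auto simp: openin_poset)
  ultimately show ?thesis by blast
qed

lemma continuous_poset:
  assumes "\<And>x. x \<in> X \<Longrightarrow> f x \<in> Y"
    and "\<And>x y. x \<in> X \<Longrightarrow> y \<in> X \<Longrightarrow> rel x y \<Longrightarrow> rel' (f x) (f y)"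
  shows "continuous_map (poset_topology X rel) (poset_topology Y rel') f"
  unfolding continuous_map_def topspace_poset openin_poset
proof (intro conjI allI impI)
  show "f \<in> X \<rightarrow> Y" using assms(1) by blast
  fix U assume U: "U \<subseteq> Y \<and> (\<forall>x\<in>U. \<forall>y\<in>Y. rel' y x \<longrightarrow> y \<in> U)"
  show "{x \<in> X. f x \<in> U} \<subseteq> X" by blast
  show "\<forall>x\<in>{x \<in> X. f x \<in> U}. \<forall>y\<in>X. rel y x \<longrightarrow> y \<in> {x \<in> X. f x \<in> U}"
  proof (intro ballI impI)
    fix x y assume "x \<in> {x \<in> X. f x \<in> U}" "y \<in> X" "rel y x"
    then show "y \<in> {x \<in> X. f x \<in> U}" using U assms by blast
  qed
qed

lemma homotopic_poset_le:
  assumes fX: "\<And>x. x \<in> X \<Longrightarrow> f x \<in> X" and gX: "\<And>x. x \<in> X \<Longrightarrow> g x \<in> X"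
    and fm: "\<And>x y. x \<in> X \<Longrightarrow> y \<in> X \<Longrightarrow> rel x y \<Longrightarrow> rel (f x) (f y)"
    and gm: "\<And>x y. x \<in> X \<Longrightarrow> y \<in> X \<Longrightarrow> rel x y \<Longrightarrow> rel (g x) (g y)"
    and le: "\<And>x. x \<in> X \<Longrightarrow> rel (f x) (g x)"
    and P: "P f" "P g"
  shows "homotopic_with P (poset_topology X rel) (poset_topology X rel) f g"
proof -
  define h where "h = (\<lambda>(t::real,x). if t < 1 then f x else g x)"
  have cont: "continuous_map (prod_topology (top_of_set {0..1}) (poset_topology X rel)) (poset_topology X rel) h"
    unfolding continuous_map_def
  proof (intro conjI allI impI)
    show "h \<in> topspace (prod_topology (top_of_set {0..1}) (poset_topology X rel)) \<rightarrow> topspace (poset_topology X rel)"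
      using fX gX by (auto simp: topspace_poset h_def)
  next
    fix U assume U: "openin (poset_topology X rel) U"
    then have U1: "U \<subseteq> X" and U2: "\<And>x y. x \<in> U \<Longrightarrow> y \<in> X \<Longrightarrow> rel y x \<Longrightarrow> y \<in> U"
      by (auto simp: openin_poset)
    define A where "A = {x \<in> X. f x \<in> U}"
    define B where "B = {x \<in> X. g x \<in> U}"
    have oA: "openin (poset_topology X rel) A"
      unfolding openin_poset A_def using U2 fm fX by blast
    have oB: "openin (poset_topology X rel) B"
      unfolding openin_poset B_def using U2 gm gX by blast
    have o01: "openin (top_of_set {0..1}) {0::real..<1}"
      unfolding openin_open by (rule exI[of _ "{..<1}"]) auto
    have eq: "{z \<in> topspace (prod_topology (top_of_set {0..1}) (poset_topology X rel)). h z \<in> U}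
        = ({0..<1} \<times> A) \<union> ({0..1} \<times> B)" (is "?L = ?R")
    proof
      show "?L \<subseteq> ?R"
      proof
        fix z assume z: "z \<in> ?L"
        obtain t x where zz: "z = (t, x)" by (cases z)
        have tx: "t \<in> {0..1}" "x \<in> X" "h (t, x) \<in> U"
          using z unfolding zz topspace_prod_topology topspace_poset by auto
        show "z \<in> ?R"
        proof (cases "t < 1")
          case True
          then have "f x \<in> U" using tx by (simp add: h_def)
          then show ?thesis using tx True unfolding zz A_def by auto
        next
          case False
          then have "g x \<in> U" using tx by (simp add: h_def)
          then show ?thesis using tx unfolding zz B_def by auto
        qed
      qed
      show "?R \<subseteq> ?L"
      proof
        fix z assume z: "z \<in> ?R"
        obtain t x where zz: "z = (t, x)" by (cases z)
        have t01: "t \<in> {0..1}" and xX: "x \<in> X" using z unfolding zz A_def B_def by auto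
        have "h (t, x) \<in> U"
        proof (cases "t < 1")
          case True
          have "f x \<in> U"
          proof (cases "x \<in> A")
            case True then show ?thesis by (simp add: A_def)
          next
            case False
            then have "g x \<in> U" using z unfolding zz B_def by auto
            then show ?thesis using U2[of "g x" "f x"] le[OF xX] fX[OF xX] by blast
          qed
          then show ?thesis using True by (simp add: h_def)
        next
          case False
          then have "x \<in> B" using z unfolding zz by auto
          then show ?thesis using False by (simp add: h_def B_def)
        qed
        then show "z \<in> ?L" using t01 xX unfolding zz topspace_prod_topology topspace_poset by auto
      qed
    qed
    show "openin (prod_topology (top_of_set {0..1}) (poset_topology X rel))
        {z \<in> topspace (prod_topology (top_of_set {0..1}) (poset_topology X rel)). h z \<in> U}"
      unfolding eq
    proof (rule openin_Un)
      show "openin (prod_topology (top_of_set {0..1}) (poset_topology X rel)) ({0::real..<1} \<times> A)"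
        unfolding openin_prod_Times_iff using o01 oA by blast
      show "openin (prod_topology (top_of_set {0..1}) (poset_topology X rel)) ({0::real..1} \<times> B)"
        by (simp add: openin_prod_Times_iff oB)
    qed
  qed
  show ?thesis
    unfolding homotopic_with_def
  proof (intro exI conjI allI ballI)
    show "continuous_map (prod_topology (top_of_set {0..1}) (poset_topology X rel)) (poset_topology X rel) h"
      by (rule cont)
    fix x show "h (0, x) = f x" by (simp add: h_def)
  next
    fix x show "h (1, x) = g x" by (simp add: h_def)
  next
    fix t :: real assume "t \<in> {0..1}"
    show "P (\<lambda>x. h (t, x))"
    proof (cases "t < 1")
      case True
      then have "(\<lambda>x. h (t, x)) = f" by (simp add: h_def fun_eq_iff)
      then show ?thesis using P by simp
    next
      case False
      then have "(\<lambda>x. h (t, x)) = g" by (simp add: h_def fun_eq_iff)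
      then show ?thesis using P by simp
    qed
  qed
qed


context group begin

lemma inv_cancel_left': "g \<in> carrier G \<Longrightarrow> z \<in> carrier G \<Longrightarrow> inv g \<otimes> (g \<otimes> z) = z"
  by (simp add: m_assoc[symmetric])

lemma conj_elem_cancel:
  assumes "g \<in> carrier G" "x \<in> carrier G" "h \<in> carrier G" "g \<otimes> x \<otimes> inv g = g \<otimes> h \<otimes> inv g"
  shows "x = h"
proof -
  have "\<And>y. y \<in> carrier G \<Longrightarrow> inv g \<otimes> (g \<otimes> y \<otimes> inv g) \<otimes> g = y"
    using assms(1) by (simp add: m_assoc inv_cancel_left')
  have e1: "inv g \<otimes> (g \<otimes> x \<otimes> inv g) \<otimes> g = x" using assms(2) by fact
  have e2: "inv g \<otimes> (g \<otimes> h \<otimes> inv g) \<otimes> g = h" using assms(3) by fact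
  show ?thesis using e1 e2 assms(4) by metis
qed

lemma conj_img:
  assumes "g \<in> carrier G"
  shows "conjugate G g H = (\<lambda>h. g \<otimes> h \<otimes> inv g) ` H"
  unfolding conjugate_def l_coset_def r_coset_def by auto

lemma conj_mem_iff:
  assumes g: "g \<in> carrier G" and H: "H \<subseteq> carrier G" and x: "x \<in> carrier G"
  shows "g \<otimes> x \<otimes> inv g \<in> conjugate G g H \<longleftrightarrow> x \<in> H"
proof
  assume "g \<otimes> x \<otimes> inv g \<in> conjugate G g H"
  then obtain h where h: "h \<in> H" "g \<otimes> x \<otimes> inv g = g \<otimes> h \<otimes> inv g"
    using g by (auto simp: conj_img)
  then have "x = h" using g x H conj_elem_cancel[of g x h] by blast
  then show "x \<in> H" using h by simp
qed (use g in \<open>auto simp: conj_img\<close>)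

lemma conj_subset_carrier:
  assumes "g \<in> carrier G" "H \<subseteq> carrier G"
  shows "conjugate G g H \<subseteq> carrier G"
  using assms by (auto simp: conj_img)

lemma conj_one: "H \<subseteq> carrier G \<Longrightarrow> conjugate G \<one> H = H"
  by (auto simp: conj_img subsetD)

lemma conj_mult:
  assumes "g \<in> carrier G" "h \<in> carrier G" "H \<subseteq> carrier G"
  shows "conjugate G (g \<otimes> h) H = conjugate G g (conjugate G h H)"
proof -
  have "\<And>x. x \<in> H \<Longrightarrow> g \<otimes> h \<otimes> x \<otimes> inv (g \<otimes> h) = g \<otimes> (h \<otimes> x \<otimes> inv h) \<otimes> inv g"
    using assms by (simp add: inv_mult_group m_assoc subsetD)
  then show ?thesis using assms by (auto simp: conj_img image_iff)
qed

lemma conj_inv_conj: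
  assumes "g \<in> carrier G" "H \<subseteq> carrier G"
  shows "conjugate G (inv g) (conjugate G g H) = H"
  using assms by (simp add: conj_mult[symmetric] conj_one)

lemma conj_conj_inv:
  assumes "g \<in> carrier G" "H \<subseteq> carrier G"
  shows "conjugate G g (conjugate G (inv g) H) = H"
  using assms by (simp add: conj_mult[symmetric] conj_one)

lemma conj_mono:
  "H \<subseteq> K \<Longrightarrow> conjugate G g H \<subseteq> conjugate G g K"
  unfolding conjugate_def l_coset_def r_coset_def by blast

lemma conj_subset_iff:
  assumes "g \<in> carrier G" "H \<subseteq> carrier G" "K \<subseteq> carrier G"
  shows "conjugate G g H \<subseteq> conjugate G g K \<longleftrightarrow> H \<subseteq> K"
  using assms conj_mono[of "conjugate G g H" "conjugate G g K" "inv g"]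
  by (metis conj_inv_conj conj_mono)

lemma conj_inj:
  assumes "g \<in> carrier G" "H \<subseteq> carrier G" "K \<subseteq> carrier G"
    "conjugate G g H = conjugate G g K"
  shows "H = K"
  using assms by (metis conj_inv_conj)

lemma conj_Int:
  assumes "g \<in> carrier G" "H \<subseteq> carrier G" "K \<subseteq> carrier G"
  shows "conjugate G g (H \<inter> K) = conjugate G g H \<inter> conjugate G g K"
proof -
  have "inj_on (\<lambda>h. g \<otimes> h \<otimes> inv g) (carrier G)"
    using assms(1) by (auto simp: inj_on_def)
  then show ?thesis using assms by (simp add: conj_img inj_on_image_Int)
qed

lemma card_conj:
  assumes "g \<in> carrier G" "H \<subseteq> carrier G"
  shows "card (conjugate G g H) = card H"
proof -
  have "inj_on (\<lambda>h. g \<otimes> h \<otimes> inv g) H"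
    using assms by (auto simp: inj_on_def subsetD)
  then show ?thesis using assms by (simp add: conj_img card_image)
qed

lemma conj_mult_elem:
  assumes "g \<in> carrier G" "x \<in> carrier G" "y \<in> carrier G"
  shows "(g \<otimes> x \<otimes> inv g) \<otimes> (g \<otimes> y \<otimes> inv g) = g \<otimes> (x \<otimes> y) \<otimes> inv g"
  using assms by (simp add: m_assoc inv_cancel_left')

lemma conj_pow_elem:
  assumes "g \<in> carrier G" "x \<in> carrier G"
  shows "(g \<otimes> x \<otimes> inv g) [^] (n::nat) = g \<otimes> (x [^] n) \<otimes> inv g"
proof (induction n)
  case 0 then show ?case using assms by simp
next
  case (Suc n)
  then show ?case using assms by (simp add: conj_mult_elem)
qed

lemma conj_subgroup:
  assumes g: "g \<in> carrier G" and H: "subgroup H G"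
  shows "subgroup (conjugate G g H) G"
proof (rule subgroupI)
  have Hc: "H \<subseteq> carrier G" using H subgroup.subset by blast
  show "conjugate G g H \<subseteq> carrier G" using conj_subset_carrier[OF g Hc] .
  show "conjugate G g H \<noteq> {}" using subgroup.one_closed[OF H] g by (auto simp: conj_img)
  fix a assume "a \<in> conjugate G g H"
  then obtain h where h: "h \<in> H" "a = g \<otimes> h \<otimes> inv g" using g by (auto simp: conj_img)
  then have "inv a = g \<otimes> inv h \<otimes> inv g"
    using g Hc by (simp add: inv_mult_group m_assoc subsetD)
  then show "inv a \<in> conjugate G g H" using h H g by (auto simp: conj_img subgroup.m_inv_closed)
next
  fix a b assume "a \<in> conjugate G g H" "b \<in> conjugate G g H"
  then obtain h k where "h \<in> H" "a = g \<otimes> h \<otimes> inv g" "k \<in> H" "b = g \<otimes> k \<otimes> inv g"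
    using g by (auto simp: conj_img)
  moreover have "h \<in> carrier G" "k \<in> carrier G" using calculation by (auto intro: subgroup.mem_carrier[OF H])
  ultimately have "a \<otimes> b = g \<otimes> (h \<otimes> k) \<otimes> inv g" "h \<otimes> k \<in> H"
    using g conj_mult_elem subgroup.m_closed[OF H] by auto
  then show "a \<otimes> b \<in> conjugate G g H"
    unfolding conj_img[OF g] by blast
qed

end


definition ract :: "('g, 'b) monoid_scheme \<Rightarrow> 'g set \<Rightarrow> 'g \<Rightarrow> 'g set \<Rightarrow> 'g set" where
  "ract G S = (\<lambda>g. \<lambda>C \<in> rcosets\<^bsub>G\<^esub> S. C #>\<^bsub>G\<^esub> inv\<^bsub>G\<^esub> g)"

lemma pgroup_fixed_point:
  assumes act: "group_action H E \<phi>" and fin: "finite E" "finite (carrier H)"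
    and card: "card (carrier H) = p ^ n" and p: "prime p" and nd: "\<not> p dvd card E"
  shows "\<exists>x\<in>E. \<forall>h\<in>carrier H. \<phi> h x = x"
proof (rule ccontr)
  assume nf: "\<not> (\<exists>x\<in>E. \<forall>h\<in>carrier H. \<phi> h x = x)"
  have orb: "p dvd card (orbit H \<phi> x)" if x: "x \<in> E" for x
  proof -
    have "card (orbit H \<phi> x) * card (stabilizer H \<phi> x) = p ^ n"
      using group_action.orbit_stabilizer_theorem[OF act x] card by (simp add: order_def)
    then have "card (orbit H \<phi> x) dvd p ^ n" by (metis dvd_triv_left)
    then obtain i where i: "card (orbit H \<phi> x) = p ^ i" using divides_primepow_nat[OF p] by blast
    show ?thesis
    proof (cases i)
      case 0
      then have c1: "card (orbit H \<phi> x) = 1" using i by simp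
      have "x \<in> orbit H \<phi> x" using group_action.orbit_refl[OF act x] .
      then have oe: "orbit H \<phi> x = {x}" using c1 card_1_singleton_iff[of "orbit H \<phi> x"] by auto
      have "\<forall>h\<in>carrier H. \<phi> h x = x"
      proof
        fix h assume "h \<in> carrier H"
        then have "\<phi> h x \<in> orbit H \<phi> x" unfolding orbit_def by blast
        then show "\<phi> h x = x" using oe by blast
      qed
      then show ?thesis using nf x by blast
    next
      case (Suc j)
      then show ?thesis using i by simp
    qed
  qed
  have ds: "(\<Sum>orb\<in>orbits H E \<phi>. \<Sum>x\<in>orb. (1::nat)) = (\<Sum>x\<in>E. 1)"
    by (rule group_action.disjoint_sum[OF act fin(1)])
  have s1: "\<And>A. (\<Sum>x\<in>A. (1::nat)) = card A" by simp
  have ce: "card E = (\<Sum>orb\<in>orbits H E \<phi>. card orb)"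
    using ds unfolding s1 by simp
  have "p dvd (\<Sum>orb\<in>orbits H E \<phi>. card orb)"
  proof (rule dvd_sum)
    fix orb assume "orb \<in> orbits H E \<phi>"
    then obtain x where "x \<in> E" "orb = orbit H \<phi> x" unfolding orbits_def by blast
    then show "p dvd card orb" using orb by simp
  qed
  then show False using nd ce by simp
qed

context group begin

lemma order_sub: "order (G\<lparr>carrier := H\<rparr>) = card H"
  by (simp add: order_def)

lemma card_sub_dvd:
  assumes "subgroup H G" "subgroup K G" "H \<subseteq> K"
  shows "card H dvd card K"
proof -
  interpret K: group "G\<lparr>carrier := K\<rparr>" using subgroup_imp_group assms(2) .
  have "subgroup H (G\<lparr>carrier := K\<rparr>)" using subgroup_incl assms .
  from K.lagrange[OF this] show ?thesis by (metis dvd_triv_right order_sub)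
qed

lemma card_dvd_order:
  assumes "subgroup H G" shows "card H dvd order G"
  using lagrange[OF assms] by (metis dvd_triv_right)

lemma p_sub_of_p_sub:
  assumes p: "prime p" and K: "is_p_subgroup G p K" and H: "subgroup H G" and HK: "H \<subseteq> K"
  shows "is_p_subgroup G p H"
proof -
  obtain n where n: "card K = p ^ n" "subgroup K G" using K by (auto simp: is_p_subgroup_def)
  have "card H dvd p ^ n" using card_sub_dvd[OF H n(2) HK] n by simp
  then show ?thesis using divides_primepow_nat[OF p] H by (auto simp: is_p_subgroup_def)
qed

lemma sylow_exists:
  assumes p: "prime p" and fin: "finite (carrier G)"
  shows "\<exists>S. sylow_p_subgroup G p S"
proof -
  define a where "a = multiplicity p (order G)"
  have "p ^ a dvd order G" unfolding a_def by (rule multiplicity_dvd)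
  then have "order G = p ^ a * (order G div p ^ a)" by simp
  from sylow_thm[OF p is_group this fin] show ?thesis
    unfolding sylow_p_subgroup_def a_def by blast
qed

lemma sylow_is_p: "sylow_p_subgroup G p S \<Longrightarrow> is_p_subgroup G p S"
  by (auto simp: sylow_p_subgroup_def is_p_subgroup_def)

lemma rcosets_sub_carrier:
  assumes "S \<subseteq> carrier G" "C \<in> rcosets S"
  shows "C \<subseteq> carrier G"
proof -
  obtain a where a: "a \<in> carrier G" "C = S #> a" using assms(2) unfolding RCOSETS_def by blast
  then show ?thesis using r_coset_subset_G[OF assms(1) a(1)] by simp
qed

lemma rcosets_mult:
  assumes "S \<subseteq> carrier G" "C \<in> rcosets S" "x \<in> carrier G"
  shows "C #> x \<in> rcosets S"
proof -
  obtain a where a: "a \<in> carrier G" "C = S #> a" using assms(2) unfolding RCOSETS_def by blast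
  then have "C #> x = S #> (a \<otimes> x)" using coset_mult_assoc[OF assms(1) a(1) assms(3)] by simp
  then show ?thesis using a assms(3) assms(1) rcosetsI[of S "a \<otimes> x"] by simp
qed

lemma rcosets_back:
  assumes "S \<subseteq> carrier G" "C \<in> rcosets S" "x \<in> carrier G"
  shows "(C #> x) #> inv x = C" "(C #> inv x) #> x = C"
proof -
  have Cc: "C \<subseteq> carrier G" using rcosets_sub_carrier[OF assms(1,2)] .
  have "(C #> x) #> inv x = C #> (x \<otimes> inv x)" using coset_mult_assoc[OF Cc assms(3) inv_closed[OF assms(3)]] .
  also have "\<dots> = C" using Cc assms(3) by simp
  finally show "(C #> x) #> inv x = C" .
  have "(C #> inv x) #> x = C #> (inv x \<otimes> x)" using coset_mult_assoc[OF Cc inv_closed[OF assms(3)] assms(3)] .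
  also have "\<dots> = C" using Cc assms(3) by simp
  finally show "(C #> inv x) #> x = C" .
qed

lemma ract_bij:
  assumes S: "subgroup S G" and g: "g \<in> carrier G"
  shows "ract G S g \<in> Bij (rcosets S)"
proof -
  have Sc: "S \<subseteq> carrier G" using S subgroup.subset by blast
  have ig: "inv g \<in> carrier G" using g by simp
  have "bij_betw (\<lambda>C. C #> inv g) (rcosets S) (rcosets S)"
  proof (rule bij_betw_byWitness[where f' = "\<lambda>C. C #> g"])
    show "\<forall>a\<in>rcosets S. a #> inv g #> g = a" using rcosets_back(2)[OF Sc _ g] by blast
    show "\<forall>a'\<in>rcosets S. a' #> g #> inv g = a'" using rcosets_back(1)[OF Sc _ g] by blast
    show "(\<lambda>C. C #> inv g) ` (rcosets S) \<subseteq> rcosets S" using rcosets_mult[OF Sc _ ig] by blast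
    show "(\<lambda>C. C #> g) ` (rcosets S) \<subseteq> rcosets S" using rcosets_mult[OF Sc _ g] by blast
  qed
  then have "bij_betw (ract G S g) (rcosets S) (rcosets S)"
    unfolding ract_def bij_betw_restrict_eq .
  moreover have "ract G S g \<in> extensional (rcosets S)"
    unfolding ract_def by (rule restrict_extensional)
  ultimately show ?thesis unfolding Bij_def by blast
qed

lemma ract_action:
  assumes S: "subgroup S G"
  shows "group_action G (rcosets S) (ract G S)"
  unfolding group_action_def group_hom_def group_hom_axioms_def
proof (intro conjI)
  show "group G" by (rule is_group)
  show "group (BijGroup (rcosets S))" by (rule group_BijGroup)
  have Sc: "S \<subseteq> carrier G" using S subgroup.subset by blast
  show "ract G S \<in> hom G (BijGroup (rcosets S))"
  proof (rule homI)
    fix x assume "x \<in> carrier G"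
    then show "ract G S x \<in> carrier (BijGroup (rcosets S))"
      using ract_bij[OF S] unfolding BijGroup_def by simp
  next
    fix x y assume xy: "x \<in> carrier G" "y \<in> carrier G"
    have bx: "ract G S x \<in> Bij (rcosets S)" and by': "ract G S y \<in> Bij (rcosets S)"
      using ract_bij[OF S] xy by auto
    have "ract G S x \<otimes>\<^bsub>BijGroup (rcosets S)\<^esub> ract G S y = compose (rcosets S) (ract G S x) (ract G S y)"
      using bx by' unfolding BijGroup_def by simp
    also have "\<dots> = ract G S (x \<otimes> y)"
    proof (rule ext)
      fix C
      show "compose (rcosets S) (ract G S x) (ract G S y) C = ract G S (x \<otimes> y) C"
      proof (cases "C \<in> rcosets S")
        case True
        have Cc: "C \<subseteq> carrier G" using rcosets_sub_carrier[OF Sc True] .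
        have m: "C #> inv y \<in> rcosets S" using rcosets_mult[OF Sc True] xy by simp
        have "C #> inv (x \<otimes> y) = C #> (inv y \<otimes> inv x)" using xy by (simp add: inv_mult_group)
        also have "\<dots> = (C #> inv y) #> inv x"
          using coset_mult_assoc[OF Cc inv_closed[OF xy(2)] inv_closed[OF xy(1)]] by simp
        finally have e: "C #> inv (x \<otimes> y) = (C #> inv y) #> inv x" .
        have "compose (rcosets S) (ract G S x) (ract G S y) C = ract G S x (ract G S y C)"
          using True by (simp add: compose_def)
        also have "\<dots> = (C #> inv y) #> inv x" using True m by (simp add: ract_def)
        also have "\<dots> = ract G S (x \<otimes> y) C" using True e by (simp add: ract_def)
        finally show ?thesis .
      next
        case False
        then show ?thesis by (simp add: compose_def ract_def)
      qed
    qed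
    finally show "ract G S (x \<otimes> y) = ract G S x \<otimes>\<^bsub>BijGroup (rcosets S)\<^esub> ract G S y" by simp
  qed
qed

lemma sylow_conj_into:
  assumes p: "prime p" and fin: "finite (carrier G)"
    and S: "sylow_p_subgroup G p S" and P: "is_p_subgroup G p P"
  shows "\<exists>g\<in>carrier G. conjugate G g P \<subseteq> S"
proof -
  have Ssub: "subgroup S G" and cS: "card S = p ^ multiplicity p (order G)"
    using S by (auto simp: sylow_p_subgroup_def)
  have Psub: "subgroup P G" and Pn: "\<exists>n. card P = p ^ n" using P by (auto simp: is_p_subgroup_def)
  then obtain n where n: "card P = p ^ n" by blast
  have Sc: "S \<subseteq> carrier G" using Ssub subgroup.subset by blast
  have Pc: "P \<subseteq> carrier G" using Psub subgroup.subset by blast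
  have act: "group_action (G\<lparr>carrier := P\<rparr>) (rcosets S) (ract G S)"
    using group_action.induced_action[OF ract_action[OF Ssub] Psub] .
  have "rcosets S \<subseteq> Pow (carrier G)" using rcosets_sub_carrier[OF Sc] by blast
  then have finE: "finite (rcosets S)"
    using fin finite_subset by blast
  have finP: "finite (carrier (G\<lparr>carrier := P\<rparr>))" using fin Pc finite_subset by auto
  have nd: "\<not> p dvd card (rcosets S)"
  proof
    assume "p dvd card (rcosets S)"
    then have "p * p ^ multiplicity p (order G) dvd card (rcosets S) * card S"
      using cS mult_dvd_mono by (metis dvd_refl)
    then have "p ^ Suc (multiplicity p (order G)) dvd order G"
      using lagrange[OF Ssub] by (metis power_Suc)
    moreover have "order G \<noteq> 0" using fin by (simp add: order_gt_0_iff_finite[symmetric])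
    moreover have "\<not> is_unit p" using p not_prime_unit by blast
    ultimately have "Suc (multiplicity p (order G)) \<le> multiplicity p (order G)"
      using multiplicity_geI by blast
    then show False by simp
  qed
  have "\<exists>C\<in>rcosets S. \<forall>h\<in>P. ract G S h C = C"
    using pgroup_fixed_point[OF act finE finP _ p nd, of n] n by simp
  then obtain C where C: "C \<in> rcosets S" and fixC: "\<forall>h\<in>P. ract G S h C = C"
    by blast
  obtain a where a: "a \<in> carrier G" "C = S #> a" using C unfolding RCOSETS_def by blast
  have "conjugate G a P \<subseteq> S"
  proof
    fix z assume "z \<in> conjugate G a P"
    then obtain x where x: "x \<in> P" "z = a \<otimes> x \<otimes> inv a" unfolding conj_img[OF a(1)] by blast
    have xc: "x \<in> carrier G" using x(1) Pc by (rule subsetD[rotated])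
    have ix: "inv x \<in> P" using subgroup.m_inv_closed[OF Psub x(1)] by simp
    have "ract G S (inv x) C = C" using fixC ix by blast
    then have "C #> inv (inv x) = C" using C unfolding ract_def by simp
    then have "C #> x = C" using xc by simp
    then have e: "(S #> a) #> x = S #> a" using a(2) by simp
    have "a \<otimes> x \<in> S #> (a \<otimes> x)" using rcos_self[OF _ Ssub] a(1) xc by simp
    then have "a \<otimes> x \<in> S #> a" using e coset_mult_assoc[OF Sc a(1) xc] by simp
    then obtain s where s: "s \<in> S" "a \<otimes> x = s \<otimes> a" unfolding r_coset_def by blast
    have sc: "s \<in> carrier G" using s Sc by blast
    have "z = (s \<otimes> a) \<otimes> inv a" using x(2) s(2) by simp
    also have "\<dots> = s" using sc a(1) by (simp add: m_assoc)
    finally have "z = s" .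
    then show "z \<in> S" using s by simp
  qed
  then show ?thesis using a by blast
qed

end


lemma prime_not_unit: "prime (p::nat) \<Longrightarrow> \<not> is_unit p"
  by (metis not_prime_unit)

context group begin

lemma order_pos: "finite (carrier G) \<Longrightarrow> order G \<noteq> 0"
  by (simp add: order_gt_0_iff_finite[symmetric])

lemma p_sub_card_le:
  assumes p: "prime p" and fin: "finite (carrier G)" and T: "is_p_subgroup G p T"
  shows "card T \<le> p ^ multiplicity p (order G)"
proof -
  obtain k where k: "card T = p ^ k" and Ts: "subgroup T G" using T by (auto simp: is_p_subgroup_def)
  have "p ^ k dvd order G" using card_dvd_order[OF Ts] k by simp
  then have "k \<le> multiplicity p (order G)"
    using multiplicity_geI order_pos[OF fin] prime_not_unit[OF p] by blast
  then show ?thesis using k power_increasing[of k "multiplicity p (order G)" p] prime_ge_1_nat[OF p] by simp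
qed

lemma sylow_maximal:
  assumes p: "prime p" and fin: "finite (carrier G)" and S: "sylow_p_subgroup G p S"
    and T: "is_p_subgroup G p T" and ST: "S \<subseteq> T"
  shows "T = S"
proof -
  have Ts: "subgroup T G" using T by (simp add: is_p_subgroup_def)
  have finT: "finite T" using finite_subset[OF subgroup.subset[OF Ts] fin] .
  have "card T \<le> card S" using p_sub_card_le[OF p fin T] S by (simp add: sylow_p_subgroup_def)
  then have "card S = card T" using card_mono[OF finT ST] by linarith
  then show ?thesis using card_subset_eq[OF finT ST] by (metis)
qed

lemma conj_p_sub:
  assumes g: "g \<in> carrier G" and P: "is_p_subgroup G p P"
  shows "is_p_subgroup G p (conjugate G g P)"
proof -
  have Ps: "subgroup P G" using P by (simp add: is_p_subgroup_def)
  obtain n where n: "card P = p ^ n" using P unfolding is_p_subgroup_def by blast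
  have Pc: "P \<subseteq> carrier G" using subgroup.subset[OF Ps] .
  have c: "card (conjugate G g P) = p ^ n" using card_conj[OF g Pc] n by simp
  show ?thesis unfolding is_p_subgroup_def using conj_subgroup[OF g Ps] c by blast
qed

lemma conj_sylow:
  assumes g: "g \<in> carrier G" and S: "sylow_p_subgroup G p S"
  shows "sylow_p_subgroup G p (conjugate G g S)"
proof -
  have Ss: "subgroup S G" using S by (simp add: sylow_p_subgroup_def)
  have Sc: "S \<subseteq> carrier G" using subgroup.subset[OF Ss] .
  have c: "card (conjugate G g S) = p ^ multiplicity p (order G)"
    using card_conj[OF g Sc] S by (simp add: sylow_p_subgroup_def)
  show ?thesis unfolding sylow_p_subgroup_def using conj_subgroup[OF g Ss] c by blast
qed

lemma sylow_containing:
  assumes p: "prime p" and fin: "finite (carrier G)" and P: "is_p_subgroup G p P"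
  shows "\<exists>S. sylow_p_subgroup G p S \<and> P \<subseteq> S"
proof -
  obtain S where S: "sylow_p_subgroup G p S" using sylow_exists[OF p fin] by blast
  obtain g where g: "g \<in> carrier G" "conjugate G g P \<subseteq> S" using sylow_conj_into[OF p fin S P] by blast
  have Ps: "subgroup P G" using P by (simp add: is_p_subgroup_def)
  have Pc: "P \<subseteq> carrier G" using subgroup.subset[OF Ps] .
  have "P \<subseteq> conjugate G (inv g) S"
    using conj_mono[OF g(2), of "inv g"] conj_inv_conj[OF g(1) Pc] by simp
  moreover have "sylow_p_subgroup G p (conjugate G (inv g) S)" using conj_sylow g S by simp
  ultimately show ?thesis by blast
qed

lemma sylow_conjugate:
  assumes p: "prime p" and fin: "finite (carrier G)"
    and S: "sylow_p_subgroup G p S" and T: "sylow_p_subgroup G p T"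
  shows "\<exists>g\<in>carrier G. conjugate G g T = S"
proof -
  obtain g where g: "g \<in> carrier G" "conjugate G g T \<subseteq> S"
    using sylow_conj_into[OF p fin S sylow_is_p[OF T]] by blast
  have "sylow_p_subgroup G p (conjugate G g T)" using conj_sylow[OF g(1) T] .
  then have "is_p_subgroup G p (conjugate G g T)" by (rule sylow_is_p)
  have "S = conjugate G g T"
    using sylow_maximal[OF p fin \<open>sylow_p_subgroup G p (conjugate G g T)\<close> sylow_is_p[OF S] g(2)] .
  then show ?thesis using g(1) by blast
qed

lemma sub_is_p_iff:
  assumes C: "subgroup C G"
  shows "is_p_subgroup (G\<lparr>carrier := C\<rparr>) p T \<longleftrightarrow> is_p_subgroup G p T \<and> T \<subseteq> C"
proof
  assume "is_p_subgroup (G\<lparr>carrier := C\<rparr>) p T"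
  then have T: "subgroup T (G\<lparr>carrier := C\<rparr>)" "\<exists>n. card T = p ^ n" by (auto simp: is_p_subgroup_def)
  have "T \<subseteq> C" using subgroup.subset[OF T(1)] by simp
  then show "is_p_subgroup G p T \<and> T \<subseteq> C"
    using incl_subgroup[OF C T(1)] T(2) by (simp add: is_p_subgroup_def)
next
  assume "is_p_subgroup G p T \<and> T \<subseteq> C"
  then show "is_p_subgroup (G\<lparr>carrier := C\<rparr>) p T"
    using subgroup_incl[OF _ C] by (auto simp: is_p_subgroup_def)
qed

lemma sub_sylow_iff:
  assumes C: "subgroup C G"
  shows "sylow_p_subgroup (G\<lparr>carrier := C\<rparr>) p T \<longleftrightarrow>
           subgroup T G \<and> T \<subseteq> C \<and> card T = p ^ multiplicity p (card C)"
proof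
  assume "sylow_p_subgroup (G\<lparr>carrier := C\<rparr>) p T"
  then have T: "subgroup T (G\<lparr>carrier := C\<rparr>)" "card T = p ^ multiplicity p (card C)"
    by (auto simp: sylow_p_subgroup_def order_def)
  have "T \<subseteq> C" using subgroup.subset[OF T(1)] by simp
  then show "subgroup T G \<and> T \<subseteq> C \<and> card T = p ^ multiplicity p (card C)"
    using incl_subgroup[OF C T(1)] T(2) by simp
next
  assume "subgroup T G \<and> T \<subseteq> C \<and> card T = p ^ multiplicity p (card C)"
  then show "sylow_p_subgroup (G\<lparr>carrier := C\<rparr>) p T"
    using subgroup_incl[OF _ C] by (auto simp: sylow_p_subgroup_def order_def)
qed

lemma conj_sub_eq:
  assumes C: "subgroup C G" and g: "g \<in> C"
  shows "conjugate (G\<lparr>carrier := C\<rparr>) g T = conjugate G g T"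
  using m_inv_consistent[OF C g]
  by (simp add: conjugate_def l_coset_def r_coset_def)

lemma sub_sylow_containing:
  assumes p: "prime p" and fin: "finite (carrier G)" and C: "subgroup C G"
    and P: "is_p_subgroup G p P" and PC: "P \<subseteq> C"
  shows "\<exists>T. subgroup T G \<and> P \<subseteq> T \<and> T \<subseteq> C \<and> card T = p ^ multiplicity p (card C)"
proof -
  interpret C: group "G\<lparr>carrier := C\<rparr>" using subgroup_imp_group[OF C] .
  have finC: "finite (carrier (G\<lparr>carrier := C\<rparr>))"
    using finite_subset[OF subgroup.subset[OF C] fin] by simp
  have "is_p_subgroup (G\<lparr>carrier := C\<rparr>) p P" using sub_is_p_iff[OF C] P PC by simp
  from C.sylow_containing[OF p finC this] obtain T where
    "sylow_p_subgroup (G\<lparr>carrier := C\<rparr>) p T" "P \<subseteq> T" by blast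
  then show ?thesis using sub_sylow_iff[OF C] by blast
qed

lemma sub_sylow_conjugate:
  assumes p: "prime p" and fin: "finite (carrier G)" and C: "subgroup C G"
    and T1: "subgroup T1 G" "T1 \<subseteq> C" "card T1 = p ^ multiplicity p (card C)"
    and T2: "subgroup T2 G" "T2 \<subseteq> C" "card T2 = p ^ multiplicity p (card C)"
  shows "\<exists>x\<in>C. conjugate G x T1 = T2"
proof -
  interpret C: group "G\<lparr>carrier := C\<rparr>" using subgroup_imp_group[OF C] .
  have finC: "finite (carrier (G\<lparr>carrier := C\<rparr>))"
    using finite_subset[OF subgroup.subset[OF C] fin] by simp
  have s1: "sylow_p_subgroup (G\<lparr>carrier := C\<rparr>) p T1" using sub_sylow_iff[OF C] T1 by simp
  have s2: "sylow_p_subgroup (G\<lparr>carrier := C\<rparr>) p T2" using sub_sylow_iff[OF C] T2 by simp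
  obtain x where x: "x \<in> C" "conjugate (G\<lparr>carrier := C\<rparr>) x T1 = T2"
    using C.sylow_conjugate[OF p finC s2 s1] by auto
  then show ?thesis using conj_sub_eq[OF C x(1)] by auto
qed

lemma sylow_in_sub:
  assumes p: "prime p" and fin: "finite (carrier G)" and C: "subgroup C G"
    and S: "sylow_p_subgroup G p S" and SC: "S \<subseteq> C"
  shows "card S = p ^ multiplicity p (card C)"
proof -
  have Ss: "subgroup S G" and cS: "card S = p ^ multiplicity p (order G)"
    using S by (auto simp: sylow_p_subgroup_def)
  have d1: "card S dvd card C" using card_sub_dvd[OF Ss C SC] .
  have d2: "card C dvd order G" using card_dvd_order[OF C] .
  have Cn0: "card C \<noteq> 0" using d2 order_pos[OF fin] by auto
  have "multiplicity p (order G) \<le> multiplicity p (card C)"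
    using multiplicity_geI[OF Cn0 prime_not_unit[OF p]] d1 cS by simp
  moreover have "multiplicity p (card C) \<le> multiplicity p (order G)"
    using dvd_imp_multiplicity_le[OF d2 order_pos[OF fin]] .
  ultimately show ?thesis using cS by simp
qed

end


definition omega :: "('g, 'b) monoid_scheme \<Rightarrow> nat \<Rightarrow> 'g set \<Rightarrow> 'g set" where
  "omega G p P = {x \<in> P. x [^]\<^bsub>G\<^esub> p = \<one>\<^bsub>G\<^esub>}"

definition comm_p_elems :: "('g, 'b) monoid_scheme \<Rightarrow> nat \<Rightarrow> 'g set \<Rightarrow> bool" where
  "comm_p_elems G p P \<longleftrightarrow> (\<forall>x\<in>P. \<forall>y\<in>P. x [^]\<^bsub>G\<^esub> p = \<one>\<^bsub>G\<^esub> \<longrightarrow> y [^]\<^bsub>G\<^esub> p = \<one>\<^bsub>G\<^esub> \<longrightarrow> x \<otimes>\<^bsub>G\<^esub> y = y \<otimes>\<^bsub>G\<^esub> x)"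

context group begin

lemma omega_sub: "omega G p P \<subseteq> P"
  unfolding omega_def by blast

lemma omega_mono: "P \<subseteq> Q \<Longrightarrow> omega G p P \<subseteq> omega G p Q"
  unfolding omega_def by blast

lemma omega_subgroup:
  assumes P: "subgroup P G" and c: "comm_p_elems G p P"
  shows "subgroup (omega G p P) G"
proof (rule subgroupI)
  have Pc: "P \<subseteq> carrier G" using subgroup.subset[OF P] .
  show "omega G p P \<subseteq> carrier G" using omega_sub Pc by (rule order_trans)
  have "\<one> \<in> omega G p P" unfolding omega_def using subgroup.one_closed[OF P] by simp
  then show "omega G p P \<noteq> {}" by blast
next
  fix a assume a: "a \<in> omega G p P"
  then have aP: "a \<in> P" and ap: "a [^] p = \<one>" unfolding omega_def by auto
  have ac: "a \<in> carrier G" using subgroup.mem_carrier[OF P aP] .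
  have "inv a [^] p = inv (a [^] p)" using nat_pow_inv[OF ac] .
  then have "inv a [^] p = \<one>" using ap by simp
  then show "inv a \<in> omega G p P" unfolding omega_def using subgroup.m_inv_closed[OF P aP] by simp
next
  fix a b assume a: "a \<in> omega G p P" and b: "b \<in> omega G p P"
  then have aP: "a \<in> P" and ap: "a [^] p = \<one>" and bP: "b \<in> P" and bp: "b [^] p = \<one>"
    unfolding omega_def by auto
  have ac: "a \<in> carrier G" using subgroup.mem_carrier[OF P aP] .
  have bc: "b \<in> carrier G" using subgroup.mem_carrier[OF P bP] .
  have ab: "a \<otimes> b = b \<otimes> a" using c aP bP ap bp unfolding comm_p_elems_def by blast
  have "(a \<otimes> b) [^] p = a [^] p \<otimes> b [^] p" using pow_mult_distrib[OF ab ac bc] .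
  then have "(a \<otimes> b) [^] p = \<one>" using ap bp by simp
  then show "a \<otimes> b \<in> omega G p P" unfolding omega_def using subgroup.m_closed[OF P aP bP] by simp
qed

lemma omega_conj:
  assumes g: "g \<in> carrier G" and Pc: "P \<subseteq> carrier G"
  shows "omega G p (conjugate G g P) = conjugate G g (omega G p P)"
proof -
  have "\<And>x. x \<in> P \<Longrightarrow> (g \<otimes> x \<otimes> inv g) [^] p = \<one> \<longleftrightarrow> x [^] p = \<one>"
  proof -
    fix x assume "x \<in> P"
    then have xc: "x \<in> carrier G" using Pc by (rule subsetD[rotated])
    have e: "(g \<otimes> x \<otimes> inv g) [^] p = g \<otimes> (x [^] p) \<otimes> inv g" using conj_pow_elem[OF g xc] .
    have "g \<otimes> (x [^] p) \<otimes> inv g = g \<otimes> \<one> \<otimes> inv g \<longleftrightarrow> x [^] p = \<one>"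
    proof
      assume "g \<otimes> (x [^] p) \<otimes> inv g = g \<otimes> \<one> \<otimes> inv g"
      then show "x [^] p = \<one>" using conj_elem_cancel[OF g nat_pow_closed[OF xc] one_closed] by simp
    qed simp
    then show "(g \<otimes> x \<otimes> inv g) [^] p = \<one> \<longleftrightarrow> x [^] p = \<one>" using e g by simp
  qed
  then show ?thesis unfolding conj_img[OF g] omega_def by auto
qed

lemma exists_order_p:
  assumes p: "prime p" and fin: "finite (carrier G)" and P: "is_p_subgroup G p P"
    and nt: "P \<noteq> {\<one>}"
  shows "\<exists>y\<in>P. y \<noteq> \<one> \<and> y [^] p = \<one>"
proof -
  have Ps: "subgroup P G" using P by (simp add: is_p_subgroup_def)
  obtain n where n: "card P = p ^ n" using P unfolding is_p_subgroup_def by blast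
  have "\<one> \<in> P" using subgroup.one_closed[OF Ps] .
  then obtain x where x: "x \<in> P" "x \<noteq> \<one>" using nt by blast
  have xc: "x \<in> carrier G" using subgroup.mem_carrier[OF Ps x(1)] .
  interpret PG: group "G\<lparr>carrier := P\<rparr>" using subgroup_imp_group[OF Ps] .
  have "x [^]\<^bsub>G\<lparr>carrier := P\<rparr>\<^esub> order (G\<lparr>carrier := P\<rparr>) = \<one>\<^bsub>G\<lparr>carrier := P\<rparr>\<^esub>"
    using PG.pow_order_eq_1 x(1) by simp
  then have xpn: "x [^] (p ^ n) = \<one>" using n by (simp add: order_def nat_pow_consistent[symmetric])
  define k where "k = (LEAST k. x [^] (p ^ k) = \<one>)"
  have xk: "x [^] (p ^ k) = \<one>" unfolding k_def using LeastI[of "\<lambda>k. x [^] (p ^ k) = \<one>" n] xpn by simp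
  have k0: "k \<noteq> 0"
  proof
    assume "k = 0"
    then have "x [^] (1::nat) = \<one>" using xk by simp
    then show False using x(2) xc by simp
  qed
  then obtain j where j: "k = Suc j" by (cases k) auto
  define y where "y = x [^] (p ^ j)"
  have "y [^] p = x [^] (p ^ j * p)" unfolding y_def using nat_pow_pow[OF xc] by simp
  also have "\<dots> = x [^] (p ^ k)" using j by (simp add: mult.commute)
  finally have yp: "y [^] p = \<one>" using xk by simp
  have "\<not> x [^] (p ^ j) = \<one>"
  proof
    assume "x [^] (p ^ j) = \<one>"
    then have "k \<le> j" unfolding k_def by (rule Least_le)
    then show False using j by simp
  qed
  then have "y \<noteq> \<one>" unfolding y_def .
  moreover have "y \<in> P" unfolding y_def
    using PG.nat_pow_closed[of x "p ^ j"] x(1) nat_pow_consistent[of x "p ^ j" P] by simp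
  ultimately show ?thesis using yp by blast
qed

end


definition cent :: "('g, 'b) monoid_scheme \<Rightarrow> 'g set \<Rightarrow> 'g set" where
  "cent G M = {c \<in> carrier G. \<forall>m\<in>M. c \<otimes>\<^bsub>G\<^esub> m = m \<otimes>\<^bsub>G\<^esub> c}"

context group begin

lemma conj_one_set: "g \<in> carrier G \<Longrightarrow> conjugate G g {\<one>} = {\<one>}"
  by (simp add: conj_img)

lemma Sp_conj:
  assumes g: "g \<in> carrier G" and P: "P \<in> Sp G p"
  shows "conjugate G g P \<in> Sp G p"
proof -
  have Pp: "is_p_subgroup G p P" and nt: "P \<noteq> {\<one>}" using P by (auto simp: Sp_def)
  have Pc: "P \<subseteq> carrier G" using Pp subgroup.subset unfolding is_p_subgroup_def by auto
  have "conjugate G g P \<noteq> {\<one>}"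
  proof
    assume "conjugate G g P = {\<one>}"
    then have "conjugate G (inv g) (conjugate G g P) = {\<one>}" using conj_one_set g by simp
    then show False using conj_inv_conj[OF g Pc] nt by simp
  qed
  then show ?thesis using conj_p_sub[OF g Pp] by (simp add: Sp_def)
qed

lemma Ap_conj:
  assumes g: "g \<in> carrier G" and E: "E \<in> Ap G p"
  shows "conjugate G g E \<in> Ap G p"
proof -
  have ES: "E \<in> Sp G p" and ab: "\<forall>x\<in>E. \<forall>y\<in>E. x \<otimes> y = y \<otimes> x" and ex: "\<forall>x\<in>E. x [^] p = \<one>"
    using E by (auto simp: Ap_def)
  have Ec: "E \<subseteq> carrier G" using ES subgroup.subset unfolding Sp_def is_p_subgroup_def by auto
  have "\<forall>x\<in>conjugate G g E. \<forall>y\<in>conjugate G g E. x \<otimes> y = y \<otimes> x"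
  proof (intro ballI)
    fix x y assume "x \<in> conjugate G g E" "y \<in> conjugate G g E"
    then obtain a b where ab': "a \<in> E" "x = g \<otimes> a \<otimes> inv g" "b \<in> E" "y = g \<otimes> b \<otimes> inv g"
      unfolding conj_img[OF g] by blast
    have ac: "a \<in> carrier G" using ab'(1) Ec by (rule subsetD[rotated])
    have bc: "b \<in> carrier G" using ab'(3) Ec by (rule subsetD[rotated])
    have "x \<otimes> y = g \<otimes> (a \<otimes> b) \<otimes> inv g" using conj_mult_elem[OF g ac bc] ab' by simp
    also have "\<dots> = g \<otimes> (b \<otimes> a) \<otimes> inv g" using ab ab'(1,3) by simp
    also have "\<dots> = y \<otimes> x" using conj_mult_elem[OF g bc ac] ab' by simp
    finally show "x \<otimes> y = y \<otimes> x" .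
  qed
  moreover have "\<forall>x\<in>conjugate G g E. x [^] p = \<one>"
  proof
    fix x assume "x \<in> conjugate G g E"
    then obtain a where a: "a \<in> E" "x = g \<otimes> a \<otimes> inv g" unfolding conj_img[OF g] by blast
    have ac: "a \<in> carrier G" using a(1) Ec by (rule subsetD[rotated])
    have "x [^] p = g \<otimes> (a [^] p) \<otimes> inv g" using conj_pow_elem[OF g ac] a(2) by simp
    then show "x [^] p = \<one>" using ex a(1) g by simp
  qed
  ultimately show ?thesis using Sp_conj[OF g ES] by (simp add: Ap_def)
qed

lemma omega_Ap:
  assumes p: "prime p" and fin: "finite (carrier G)" and P: "P \<in> Sp G p"
    and c: "comm_p_elems G p P"
  shows "omega G p P \<in> Ap G p"
proof -
  have Pp: "is_p_subgroup G p P" and nt: "P \<noteq> {\<one>}" using P by (auto simp: Sp_def)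
  have Ps: "subgroup P G" using Pp by (simp add: is_p_subgroup_def)
  have Os: "subgroup (omega G p P) G" using omega_subgroup[OF Ps c] .
  have Op: "is_p_subgroup G p (omega G p P)" using p_sub_of_p_sub[OF p Pp Os omega_sub] .
  obtain y where y: "y \<in> P" "y \<noteq> \<one>" "y [^] p = \<one>" using exists_order_p[OF p fin Pp nt] by blast
  have "y \<in> omega G p P" using y unfolding omega_def by simp
  then have "omega G p P \<noteq> {\<one>}" using y(2) by blast
  moreover have "\<forall>x\<in>omega G p P. \<forall>y\<in>omega G p P. x \<otimes> y = y \<otimes> x"
    using c unfolding comm_p_elems_def omega_def by blast
  moreover have "\<forall>x\<in>omega G p P. x [^] p = \<one>" unfolding omega_def by blast
  ultimately show ?thesis using Op by (simp add: Ap_def Sp_def)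
qed

lemma Ap_sub_omega:
  assumes E: "E \<in> Ap G p" and EP: "E \<subseteq> P"
  shows "E \<subseteq> omega G p P"
  using E EP unfolding Ap_def omega_def by blast

lemma cent_subgroup:
  assumes M: "M \<subseteq> carrier G"
  shows "subgroup (cent G M) G"
proof (rule subgroupI)
  show "cent G M \<subseteq> carrier G" unfolding cent_def by blast
  have "\<one> \<in> cent G M" unfolding cent_def using M by auto
  then show "cent G M \<noteq> {}" by blast
next
  fix a assume a: "a \<in> cent G M"
  then have ac: "a \<in> carrier G" and am: "\<forall>m\<in>M. a \<otimes> m = m \<otimes> a" unfolding cent_def by auto
  have "\<forall>m\<in>M. inv a \<otimes> m = m \<otimes> inv a"
  proof
    fix m assume m: "m \<in> M"
    have mc: "m \<in> carrier G" using m M by (rule subsetD[rotated])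
    have "inv a \<otimes> m = inv a \<otimes> (m \<otimes> a) \<otimes> inv a" using ac mc by (simp add: m_assoc)
    also have "\<dots> = inv a \<otimes> (a \<otimes> m) \<otimes> inv a" using am m by simp
    also have "\<dots> = m \<otimes> inv a" using ac mc by (simp add: m_assoc[symmetric])
    finally show "inv a \<otimes> m = m \<otimes> inv a" .
  qed
  then show "inv a \<in> cent G M" unfolding cent_def using ac by simp
next
  fix a b assume a: "a \<in> cent G M" and b: "b \<in> cent G M"
  then have ac: "a \<in> carrier G" and am: "\<forall>m\<in>M. a \<otimes> m = m \<otimes> a"
    and bc: "b \<in> carrier G" and bm: "\<forall>m\<in>M. b \<otimes> m = m \<otimes> b" unfolding cent_def by auto
  have "\<forall>m\<in>M. a \<otimes> b \<otimes> m = m \<otimes> (a \<otimes> b)"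
  proof
    fix m assume m: "m \<in> M"
    have mc: "m \<in> carrier G" using m M by (rule subsetD[rotated])
    have "a \<otimes> b \<otimes> m = a \<otimes> (b \<otimes> m)" using ac bc mc by (simp add: m_assoc)
    also have "\<dots> = a \<otimes> (m \<otimes> b)" using bm m by simp
    also have "\<dots> = (a \<otimes> m) \<otimes> b" using ac bc mc by (simp add: m_assoc)
    also have "\<dots> = (m \<otimes> a) \<otimes> b" using am m by simp
    also have "\<dots> = m \<otimes> (a \<otimes> b)" using ac bc mc by (simp add: m_assoc)
    finally show "a \<otimes> b \<otimes> m = m \<otimes> (a \<otimes> b)" .
  qed
  then show "a \<otimes> b \<in> cent G M" unfolding cent_def using ac bc by simp
qed

lemma cent_conj_fix:
  assumes x: "x \<in> cent G M" and QM: "Q \<subseteq> M" and M: "M \<subseteq> carrier G"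
  shows "conjugate G x Q = Q"
proof -
  have xc: "x \<in> carrier G" and xm: "\<forall>m\<in>M. x \<otimes> m = m \<otimes> x" using x unfolding cent_def by auto
  have "\<And>q. q \<in> Q \<Longrightarrow> q \<in> carrier G \<Longrightarrow> x \<otimes> q \<otimes> inv x = q"
  proof -
    fix q assume q: "q \<in> Q" "q \<in> carrier G"
    have "x \<otimes> q = q \<otimes> x" using xm QM q(1) by blast
    then have "x \<otimes> q \<otimes> inv x = q \<otimes> x \<otimes> inv x" by simp
    also have "\<dots> = q" using xc q(2) by (simp add: m_assoc)
    finally show "x \<otimes> q \<otimes> inv x = q" .
  qed
  moreover have Qc: "Q \<subseteq> carrier G" using QM M by (rule order_trans)
  ultimately have "\<forall>q\<in>Q. x \<otimes> q \<otimes> inv x = q" by blast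
  then have "(\<lambda>q. x \<otimes> q \<otimes> inv x) ` Q = (\<lambda>q. q) ` Q" by (intro image_cong) auto
  then show ?thesis unfolding conj_img[OF xc] by simp
qed

end


context group begin

lemma conj_back_elem:
  assumes "g \<in> carrier G" "y \<in> carrier G"
  shows "inv g \<otimes> (g \<otimes> y \<otimes> inv g) \<otimes> g = y"
  using assms by (simp add: m_assoc inv_cancel_left')

lemma fusion:
  assumes p: "prime p" and fin: "finite (carrier G)"
    and Ep: "is_p_subgroup G p E" and Eab: "\<forall>x\<in>E. \<forall>y\<in>E. x \<otimes> y = y \<otimes> x"
    and Phieq: "\<And>h T. h \<in> carrier G \<Longrightarrow> is_p_subgroup G p T \<Longrightarrow> Phi (conjugate G h T) = conjugate G h (Phi T)"
    and PhiE: "\<And>T. is_p_subgroup G p T \<Longrightarrow> E \<subseteq> T \<Longrightarrow> Phi T = E"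
    and Phic: "\<And>T. is_p_subgroup G p T \<Longrightarrow> Phi T \<subseteq> carrier G"
    and M: "M \<subseteq> E" and g: "g \<in> carrier G" and gM: "conjugate G g M \<subseteq> E"
  shows "\<exists>n\<in>carrier G. conjugate G n E = E \<and> (\<forall>Q. Q \<subseteq> M \<longrightarrow> conjugate G n Q = conjugate G g Q)"
proof -
  have Es: "subgroup E G" using Ep by (simp add: is_p_subgroup_def)
  have Ec: "E \<subseteq> carrier G" using subgroup.subset[OF Es] .
  have Mc: "M \<subseteq> carrier G" using M Ec by (rule order_trans)
  define C where "C = cent G M"
  have Cs: "subgroup C G" unfolding C_def using cent_subgroup[OF Mc] .
  have EC: "E \<subseteq> C"
  proof
    fix e assume e: "e \<in> E"
    have "\<forall>m\<in>M. e \<otimes> m = m \<otimes> e"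
    proof
      fix m assume "m \<in> M"
      then have "m \<in> E" using M by (rule subsetD[rotated])
      then show "e \<otimes> m = m \<otimes> e" using Eab e by blast
    qed
    moreover have "e \<in> carrier G" using e Ec by (rule subsetD[rotated])
    ultimately show "e \<in> C" unfolding C_def cent_def by simp
  qed
  have ig: "inv g \<in> carrier G" using g by simp
  define E' where "E' = conjugate G (inv g) E"
  have E'C: "E' \<subseteq> C"
  proof
    fix z assume "z \<in> E'"
    then obtain e where e: "e \<in> E" "z = inv g \<otimes> e \<otimes> g"
      unfolding E'_def conj_img[OF ig] using g by auto
    have ec: "e \<in> carrier G" using e(1) Ec by (rule subsetD[rotated])
    have zc: "z \<in> carrier G" using e(2) ec g by simp
    have "\<forall>m\<in>M. z \<otimes> m = m \<otimes> z"
    proof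
      fix m assume m: "m \<in> M"
      have mc: "m \<in> carrier G" using m Mc by (rule subsetD[rotated])
      define m' where "m' = g \<otimes> m \<otimes> inv g"
      have m'E: "m' \<in> E" unfolding m'_def using gM m unfolding conj_img[OF g] by blast
      have m'c: "m' \<in> carrier G" using m'E Ec by (rule subsetD[rotated])
      have mm: "m = inv g \<otimes> m' \<otimes> g" unfolding m'_def using conj_back_elem[OF g mc] by simp
      have cm: "\<And>a b. a \<in> carrier G \<Longrightarrow> b \<in> carrier G \<Longrightarrow>
          (inv g \<otimes> a \<otimes> g) \<otimes> (inv g \<otimes> b \<otimes> g) = inv g \<otimes> (a \<otimes> b) \<otimes> g"
        using conj_mult_elem[OF ig] g by simp
      have "z \<otimes> m = inv g \<otimes> (e \<otimes> m') \<otimes> g" using cm[OF ec m'c] e(2) mm by simp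
      also have "\<dots> = inv g \<otimes> (m' \<otimes> e) \<otimes> g" using Eab e(1) m'E by simp
      also have "\<dots> = m \<otimes> z" using cm[OF m'c ec] e(2) mm by simp
      finally show "z \<otimes> m = m \<otimes> z" .
    qed
    then show "z \<in> C" unfolding C_def cent_def using zc by simp
  qed
  have E'p: "is_p_subgroup G p E'" unfolding E'_def using conj_p_sub[OF ig Ep] .
  obtain T1 where T1: "subgroup T1 G" "E \<subseteq> T1" "T1 \<subseteq> C" "card T1 = p ^ multiplicity p (card C)"
    using sub_sylow_containing[OF p fin Cs Ep EC] by blast
  obtain T2 where T2: "subgroup T2 G" "E' \<subseteq> T2" "T2 \<subseteq> C" "card T2 = p ^ multiplicity p (card C)"
    using sub_sylow_containing[OF p fin Cs E'p E'C] by blast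
  obtain x where x: "x \<in> C" "conjugate G x T1 = T2"
    using sub_sylow_conjugate[OF p fin Cs T1(1,3,4) T2(1,3,4)] by blast
  have xc: "x \<in> carrier G" using x(1) unfolding C_def cent_def by simp
  have T1p: "is_p_subgroup G p T1" using T1 unfolding is_p_subgroup_def by blast
  have T2p: "is_p_subgroup G p T2" using T2 unfolding is_p_subgroup_def by blast
  have T2c: "T2 \<subseteq> carrier G" using subgroup.subset[OF T2(1)] .
  have PT1: "Phi T1 = E" using PhiE[OF T1p T1(2)] .
  have gT2p: "is_p_subgroup G p (conjugate G g T2)" using conj_p_sub[OF g T2p] .
  have "E \<subseteq> conjugate G g T2"
    using conj_mono[OF T2(2), of g] conj_conj_inv[OF g Ec] unfolding E'_def by simp
  then have "Phi (conjugate G g T2) = E" using PhiE[OF gT2p] by simp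
  then have "conjugate G g (Phi T2) = E" using Phieq[OF g T2p] by simp
  then have "Phi T2 = E'" unfolding E'_def using conj_inv_conj[OF g Phic[OF T2p]] by simp
  moreover have "Phi T2 = conjugate G x E" using Phieq[OF xc T1p] x(2) PT1 by simp
  ultimately have "conjugate G x E = E'" by simp
  then have "conjugate G g (conjugate G x E) = E" unfolding E'_def using conj_conj_inv[OF g Ec] by simp
  then have nE: "conjugate G (g \<otimes> x) E = E" using conj_mult[OF g xc Ec] by simp
  have "\<forall>Q. Q \<subseteq> M \<longrightarrow> conjugate G (g \<otimes> x) Q = conjugate G g Q"
  proof (intro allI impI)
    fix Q assume QM: "Q \<subseteq> M"
    have Qc: "Q \<subseteq> carrier G" using QM Mc by (rule order_trans)
    have "conjugate G (g \<otimes> x) Q = conjugate G g (conjugate G x Q)" using conj_mult[OF g xc Qc] .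
    also have "conjugate G x Q = Q" using cent_conj_fix[OF _ QM Mc] x(1) unfolding C_def by simp
    finally show "conjugate G (g \<otimes> x) Q = conjugate G g Q" .
  qed
  moreover have "g \<otimes> x \<in> carrier G" using g xc by simp
  ultimately show ?thesis using nE by blast
qed

end


definition orbc :: "('g, 'b) monoid_scheme \<Rightarrow> 'g set set \<Rightarrow> 'g set set set" where
  "orbc G c = {chain_act G g c | g. g \<in> carrier G}"

lemma orbit_set_eq: "orbit_set G X = orbc G ` chains_poset X"
  unfolding orbit_set_def orbc_def by (simp only: setcompr_eq_image Collect_mem_eq)

lemma chain_max:
  assumes "finite c" "c \<noteq> {}" "\<forall>a\<in>c. \<forall>b\<in>c. a \<subseteq> b \<or> b \<subseteq> a"
  shows "\<exists>m\<in>c. \<forall>Q\<in>c. Q \<subseteq> m"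
  using assms
proof (induction c rule: finite_ne_induct)
  case (singleton x) then show ?case by simp
next
  case (insert x F)
  have "\<forall>a\<in>F. \<forall>b\<in>F. a \<subseteq> b \<or> b \<subseteq> a" using insert.prems by simp
  then obtain m where m: "m \<in> F" "\<forall>Q\<in>F. Q \<subseteq> m" using insert.IH by meson
  have "x \<subseteq> m \<or> m \<subseteq> x" using insert.prems m(1) by simp
  then show ?case
  proof
    assume "x \<subseteq> m" then show ?thesis using m by auto
  next
    assume "m \<subseteq> x" then show ?thesis using m by auto
  qed
qed

context group begin

definition conj_closed :: "'a set set \<Rightarrow> bool" where
  "conj_closed X \<longleftrightarrow> (\<forall>Q\<in>X. Q \<subseteq> carrier G \<and> Q \<noteq> {}) \<and> (\<forall>g\<in>carrier G. \<forall>Q\<in>X. conjugate G g Q \<in> X)"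

lemma chain_act_chain:
  assumes X: "conj_closed X" and c: "c \<in> chains_poset X" and g: "g \<in> carrier G"
  shows "chain_act G g c \<in> chains_poset X"
proof -
  have c1: "c \<noteq> {}" "c \<subseteq> X" "\<forall>a\<in>c. \<forall>b\<in>c. a \<subseteq> b \<or> b \<subseteq> a" using c by (auto simp: chains_poset_def)
  have cl: "\<forall>Q\<in>X. conjugate G g Q \<in> X" using X g unfolding conj_closed_def by blast
  have "chain_act G g c \<subseteq> X"
  proof
    fix z assume "z \<in> chain_act G g c"
    then obtain Q where Q: "Q \<in> c" "z = conjugate G g Q" unfolding chain_act_def by blast
    then show "z \<in> X" using cl c1(2) by blast
  qed
  moreover have "chain_act G g c \<noteq> {}" using c1(1) unfolding chain_act_def by blast
  moreover have "\<forall>a\<in>chain_act G g c. \<forall>b\<in>chain_act G g c. a \<subseteq> b \<or> b \<subseteq> a"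
  proof (intro ballI)
    fix a b assume "a \<in> chain_act G g c" "b \<in> chain_act G g c"
    then obtain A B where AB: "A \<in> c" "a = conjugate G g A" "B \<in> c" "b = conjugate G g B"
      unfolding chain_act_def by blast
    have "A \<subseteq> B \<or> B \<subseteq> A" using c1(3) AB(1,3) by blast
    then show "a \<subseteq> b \<or> b \<subseteq> a"
    proof
      assume "A \<subseteq> B" then show ?thesis using conj_mono[of A B g] AB by simp
    next
      assume "B \<subseteq> A" then show ?thesis using conj_mono[of B A g] AB by simp
    qed
  qed
  ultimately show ?thesis by (simp add: chains_poset_def)
qed

lemma chain_act_mult:
  assumes "g \<in> carrier G" "h \<in> carrier G" "\<forall>Q\<in>c. Q \<subseteq> carrier G"
  shows "chain_act G (g \<otimes> h) c = chain_act G g (chain_act G h c)"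
  unfolding chain_act_def image_comp using assms conj_mult by (auto intro!: image_cong)

lemma chain_act_one:
  assumes "\<forall>Q\<in>c. Q \<subseteq> carrier G"
  shows "chain_act G \<one> c = c"
  unfolding chain_act_def using assms conj_one by simp

lemma chain_act_inv:
  assumes "g \<in> carrier G" "\<forall>Q\<in>c. Q \<subseteq> carrier G"
  shows "chain_act G (inv g) (chain_act G g c) = c"
  using chain_act_mult[of "inv g" g c] chain_act_one[of c] assms by simp

lemma chains_carrier:
  assumes X: "conj_closed X" and c: "c \<in> chains_poset X"
  shows "\<forall>Q\<in>c. Q \<subseteq> carrier G"
  using assms unfolding conj_closed_def chains_poset_def by blast

lemma orbc_self:
  assumes X: "conj_closed X" and c: "c \<in> chains_poset X"
  shows "c \<in> orbc G c"
  unfolding orbc_def using chain_act_one[OF chains_carrier[OF X c]] one_closed by (metis (mono_tags, lifting) mem_Collect_eq)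

lemma orbc_act:
  assumes X: "conj_closed X" and c: "c \<in> chains_poset X" and d: "d \<in> orbc G c" and g: "g \<in> carrier G"
  shows "chain_act G g d \<in> orbc G c"
proof -
  obtain h where h: "h \<in> carrier G" "d = chain_act G h c" using d unfolding orbc_def by blast
  have "chain_act G g d = chain_act G (g \<otimes> h) c"
    using chain_act_mult[OF g h(1) chains_carrier[OF X c]] h(2) by simp
  then show ?thesis unfolding orbc_def using g h(1) by blast
qed

lemma orbc_mem_chain:
  assumes X: "conj_closed X" and c: "c \<in> chains_poset X" and d: "d \<in> orbc G c"
  shows "d \<in> chains_poset X"
  using d chain_act_chain[OF X c] unfolding orbc_def by blast

lemma orbc_eq:
  assumes X: "conj_closed X" and c: "c \<in> chains_poset X" and d: "d \<in> orbc G c"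
  shows "orbc G d = orbc G c"
proof
  show "orbc G d \<subseteq> orbc G c"
  proof
    fix e assume "e \<in> orbc G d"
    then obtain g where g: "g \<in> carrier G" "e = chain_act G g d" unfolding orbc_def by blast
    then show "e \<in> orbc G c" using orbc_act[OF X c d g(1)] by simp
  qed
  obtain h where h: "h \<in> carrier G" "d = chain_act G h c" using d unfolding orbc_def by blast
  have "c = chain_act G (inv h) d" using chain_act_inv[OF h(1) chains_carrier[OF X c]] h(2) by simp
  then have "c \<in> orbc G d" unfolding orbc_def using h(1) by blast
  then show "orbc G c \<subseteq> orbc G d"
  proof -
    assume cd: "c \<in> orbc G d"
    have dX: "d \<in> chains_poset X" using orbc_mem_chain[OF X c d] .
    show ?thesis
    proof
      fix e assume "e \<in> orbc G c"
      then obtain g where g: "g \<in> carrier G" "e = chain_act G g c" unfolding orbc_def by blast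
      then show "e \<in> orbc G d" using orbc_act[OF X dX cd g(1)] by simp
    qed
  qed
qed

lemma orbit_le_refl:
  assumes X: "conj_closed X" and ob: "ob \<in> orbit_set G X"
  shows "orbit_le ob ob"
proof -
  obtain c where c: "c \<in> chains_poset X" "ob = orbc G c" using ob unfolding orbit_set_eq by blast
  then show ?thesis unfolding orbit_le_def using orbc_self[OF X c(1)] by blast
qed

lemma induced_orbc:
  assumes X: "conj_closed X" and c: "c \<in> chains_poset X"
    and eqv: "\<And>g d. g \<in> carrier G \<Longrightarrow> d \<in> chains_poset X \<Longrightarrow> phi (chain_act G g d) = chain_act G g (phi d)"
  shows "phi ` orbc G c = orbc G (phi c)"
proof
  show "phi ` orbc G c \<subseteq> orbc G (phi c)"
  proof
    fix e assume "e \<in> phi ` orbc G c"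
    then obtain g where g: "g \<in> carrier G" "e = phi (chain_act G g c)" unfolding orbc_def by blast
    then show "e \<in> orbc G (phi c)" using eqv[OF g(1) c] unfolding orbc_def by blast
  qed
  show "orbc G (phi c) \<subseteq> phi ` orbc G c"
  proof
    fix e assume "e \<in> orbc G (phi c)"
    then obtain g where g: "g \<in> carrier G" "e = chain_act G g (phi c)" unfolding orbc_def by blast
    then have "e = phi (chain_act G g c)" using eqv[OF g(1) c] by simp
    then show "e \<in> phi ` orbc G c" unfolding orbc_def using g(1) by blast
  qed
qed

lemma induced_maps:
  assumes X: "conj_closed X" and Y: "conj_closed Y"
    and into: "\<And>d. d \<in> chains_poset X \<Longrightarrow> phi d \<in> chains_poset Y"
    and eqv: "\<And>g d. g \<in> carrier G \<Longrightarrow> d \<in> chains_poset X \<Longrightarrow> phi (chain_act G g d) = chain_act G g (phi d)"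
    and ob: "ob \<in> orbit_set G X"
  shows "phi ` ob \<in> orbit_set G Y"
proof -
  obtain c where c: "c \<in> chains_poset X" "ob = orbc G c" using ob unfolding orbit_set_eq by blast
  then show ?thesis using induced_orbc[OF X c(1) eqv] into[OF c(1)] unfolding orbit_set_eq by auto
qed

lemma induced_mono:
  assumes mono: "\<And>c d. c \<in> chains_poset X \<Longrightarrow> d \<in> chains_poset X \<Longrightarrow> c \<subseteq> d \<Longrightarrow> phi c \<subseteq> phi d"
    and X: "conj_closed X" and o1: "o1 \<in> orbit_set G X" and o2: "o2 \<in> orbit_set G X"
    and le: "orbit_le o1 o2"
  shows "orbit_le (phi ` o1) (phi ` o2)"
proof -
  obtain c d where cd: "c \<in> o1" "d \<in> o2" "c \<subseteq> d" using le unfolding orbit_le_def by blast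
  obtain c1 where c1: "c1 \<in> chains_poset X" "o1 = orbc G c1" using o1 unfolding orbit_set_eq by blast
  obtain d1 where d1: "d1 \<in> chains_poset X" "o2 = orbc G d1" using o2 unfolding orbit_set_eq by blast
  have "c \<in> chains_poset X" using orbc_mem_chain[OF X c1(1)] cd(1) c1(2) by simp
  moreover have "d \<in> chains_poset X" using orbc_mem_chain[OF X d1(1)] cd(2) d1(2) by simp
  ultimately have "phi c \<subseteq> phi d" using mono cd(3) by blast
  then show ?thesis unfolding orbit_le_def using cd by blast
qed

lemma induced_le:
  assumes le: "\<And>c. c \<in> chains_poset X \<Longrightarrow> phi c \<subseteq> psi c"
    and X: "conj_closed X" and ob: "ob \<in> orbit_set G X"
  shows "orbit_le (phi ` ob) (psi ` ob)"
proof -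
  obtain c where c: "c \<in> chains_poset X" "ob = orbc G c" using ob unfolding orbit_set_eq by blast
  have "c \<in> ob" using orbc_self[OF X c(1)] c(2) by simp
  then show ?thesis unfolding orbit_le_def using le[OF c(1)] by blast
qed

end


definition hh :: "('g set \<Rightarrow> 'g set) \<Rightarrow> nat \<Rightarrow> nat \<Rightarrow> 'g set set \<Rightarrow> 'g set set" where
  "hh om a b c = om ` {Q \<in> c. card Q \<le> a} \<union> {Q \<in> c. b \<le> card Q}"

context group begin

definition good :: "'a set set \<Rightarrow> ('a set set \<Rightarrow> 'a set set) \<Rightarrow> bool" where
  "good X phi \<longleftrightarrow> (\<forall>d\<in>chains_poset X. phi d \<in> chains_poset X)
     \<and> (\<forall>g\<in>carrier G. \<forall>d\<in>chains_poset X. phi (chain_act G g d) = chain_act G g (phi d))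
     \<and> (\<forall>c\<in>chains_poset X. \<forall>d\<in>chains_poset X. c \<subseteq> d \<longrightarrow> phi c \<subseteq> phi d)"

lemma good_map:
  assumes X: "conj_closed X" and gd: "good X phi" and ob: "ob \<in> orbit_set G X"
  shows "phi ` ob \<in> orbit_set G X"
  using induced_maps[OF X X _ _ ob, of phi] gd unfolding good_def by blast

lemma good_mono:
  assumes X: "conj_closed X" and gd: "good X phi"
    and o1: "o1 \<in> orbit_set G X" and o2: "o2 \<in> orbit_set G X" and le: "orbit_le o1 o2"
  shows "orbit_le (phi ` o1) (phi ` o2)"
  using induced_mono[OF _ X o1 o2 le, of phi] gd unfolding good_def by blast

lemma good_homotopic:
  assumes X: "conj_closed X" and g1: "good X phi" and g2: "good X psi"
    and le: "\<And>c. c \<in> chains_poset X \<Longrightarrow> phi c \<subseteq> psi c"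
  shows "homotopic_with (\<lambda>_. True) (orbit_space G X) (orbit_space G X) (\<lambda>ob. phi ` ob) (\<lambda>ob. psi ` ob)"
  unfolding orbit_space_def
  by (rule homotopic_poset_le)
     (auto intro: good_map[OF X g1] good_map[OF X g2] good_mono[OF X g1] good_mono[OF X g2]
        induced_le[OF le X])

lemma good_id: "good X (\<lambda>c. c)"
  unfolding good_def by simp

end

locale orb_setup = group G for G (structure) +
  fixes X Y :: "'a set set" and om :: "'a set \<Rightarrow> 'a set" and E :: "'a set"
  assumes fin: "finite (carrier G)"
    and X: "conj_closed X" and Y: "conj_closed Y" and YX: "Y \<subseteq> X"
    and om_Y: "\<And>Q. Q \<in> X \<Longrightarrow> om Q \<in> Y"
    and om_sub: "\<And>Q. Q \<in> X \<Longrightarrow> om Q \<subseteq> Q"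
    and om_mono: "\<And>Q Q'. Q \<in> X \<Longrightarrow> Q' \<in> X \<Longrightarrow> Q \<subseteq> Q' \<Longrightarrow> om Q \<subseteq> om Q'"
    and om_conj: "\<And>g Q. g \<in> carrier G \<Longrightarrow> Q \<in> X \<Longrightarrow> om (conjugate G g Q) = conjugate G g (om Q)"
    and EY: "E \<in> Y"
    and intoE: "\<And>Q. Q \<in> Y \<Longrightarrow> \<exists>g\<in>carrier G. conjugate G g Q \<subseteq> E"
    and fus: "\<And>M g. M \<in> Y \<Longrightarrow> M \<subseteq> E \<Longrightarrow> g \<in> carrier G \<Longrightarrow> conjugate G g M \<subseteq> E \<Longrightarrow>
               \<exists>n\<in>carrier G. conjugate G n E = E \<and> (\<forall>Q. Q \<subseteq> M \<longrightarrow> conjugate G n Q = conjugate G g Q)"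
begin

lemma X_carrier: "Q \<in> X \<Longrightarrow> Q \<subseteq> carrier G"
  using X unfolding conj_closed_def by blast

lemma X_ne: "Q \<in> X \<Longrightarrow> Q \<noteq> {}"
  using X unfolding conj_closed_def by blast

lemma X_conj: "g \<in> carrier G \<Longrightarrow> Q \<in> X \<Longrightarrow> conjugate G g Q \<in> X"
  using X unfolding conj_closed_def by blast

lemma X_finite: "Q \<in> X \<Longrightarrow> finite Q"
  using X_carrier fin finite_subset by blast

lemma X_card_pos: "Q \<in> X \<Longrightarrow> 0 < card Q"
  using X_finite X_ne card_gt_0_iff by blast

lemma X_card_le: "Q \<in> X \<Longrightarrow> card Q \<le> card (carrier G)"
  using X_carrier fin card_mono by blast

lemma chain_finite: "c \<in> chains_poset X \<Longrightarrow> finite c"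
proof -
  assume c: "c \<in> chains_poset X"
  have "c \<subseteq> Pow (carrier G)" using c X_carrier unfolding chains_poset_def by blast
  then show "finite c" using fin finite_subset by blast
qed

lemma hh_chain:
  assumes c: "c \<in> chains_poset X" and ab: "a \<le> b" "b \<le> Suc a"
  shows "hh om a b c \<in> chains_poset X"
proof -
  have c1: "c \<noteq> {}" "c \<subseteq> X" "\<forall>A\<in>c. \<forall>B\<in>c. A \<subseteq> B \<or> B \<subseteq> A"
    using c by (auto simp: chains_poset_def)
  have sub: "hh om a b c \<subseteq> X"
  proof
    fix z assume "z \<in> hh om a b c"
    then consider (o) Q where "Q \<in> c" "z = om Q" | (i) "z \<in> c" unfolding hh_def by blast
    then show "z \<in> X"
    proof cases
      case o then show ?thesis using om_Y YX c1(2) by blast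
    next
      case i then show ?thesis using c1(2) by blast
    qed
  qed
  obtain Q0 where Q0: "Q0 \<in> c" using c1(1) by blast
  have ne: "hh om a b c \<noteq> {}"
  proof (cases "card Q0 \<le> a")
    case True then show ?thesis unfolding hh_def using Q0 by blast
  next
    case False then have "b \<le> card Q0" using ab by simp
    then show ?thesis unfolding hh_def using Q0 by blast
  qed
  have key: "om Q \<subseteq> Q'" if Q: "Q \<in> c" "card Q \<le> a" and Q': "Q' \<in> c" "b \<le> card Q'" for Q Q'
  proof -
    have QX: "Q \<in> X" and Q'X: "Q' \<in> X" using Q(1) Q'(1) c1(2) by blast+
    have "Q \<subseteq> Q' \<or> Q' \<subseteq> Q" using c1(3) Q(1) Q'(1) by blast
    then have "Q \<subseteq> Q'"
    proof
      assume "Q' \<subseteq> Q"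
      moreover have "card Q' \<le> card Q" using card_mono[OF X_finite[OF QX] \<open>Q' \<subseteq> Q\<close>] .
      ultimately have "card Q' = card Q" using Q(2) Q'(2) ab by linarith
      then have "Q' = Q" using card_subset_eq[OF X_finite[OF QX] \<open>Q' \<subseteq> Q\<close>] by metis
      then show "Q \<subseteq> Q'" by simp
    qed
    then show ?thesis using om_sub[OF QX] by blast
  qed
  have cmp: "\<forall>A\<in>hh om a b c. \<forall>B\<in>hh om a b c. A \<subseteq> B \<or> B \<subseteq> A"
  proof (intro ballI)
    fix A B assume A: "A \<in> hh om a b c" and B: "B \<in> hh om a b c"
    from A consider (o) QA where "QA \<in> c" "card QA \<le> a" "A = om QA" | (i) "A \<in> c" "b \<le> card A"
      unfolding hh_def by blast
    then show "A \<subseteq> B \<or> B \<subseteq> A"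
    proof cases
      case o note oA = this
      from B consider (o) QB where "QB \<in> c" "card QB \<le> a" "B = om QB" | (i) "B \<in> c" "b \<le> card B"
        unfolding hh_def by blast
      then show ?thesis
      proof cases
        case o
        have "QA \<subseteq> QB \<or> QB \<subseteq> QA" using c1(3) oA(1) o(1) by blast
        moreover have "QA \<in> X" "QB \<in> X" using oA(1) o(1) c1(2) by blast+
        ultimately show ?thesis using om_mono oA(3) o(3) by metis
      next
        case i then show ?thesis using key[OF oA(1,2) i] oA(3) by blast
      qed
    next
      case i note iA = this
      from B consider (o) QB where "QB \<in> c" "card QB \<le> a" "B = om QB" | (i) "B \<in> c" "b \<le> card B"
        unfolding hh_def by blast
      then show ?thesis
      proof cases
        case o then show ?thesis using key[OF o(1,2) iA] by blast
      next
        case i then show ?thesis using c1(3) iA(1) by blast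
      qed
    qed
  qed
  show ?thesis using sub ne cmp by (simp add: chains_poset_def)
qed

lemma hh_equiv:
  assumes g: "g \<in> carrier G" and c: "c \<in> chains_poset X"
  shows "hh om a b (chain_act G g c) = chain_act G g (hh om a b c)"
proof -
  have cX: "c \<subseteq> X" using c by (simp add: chains_poset_def)
  have cc: "\<And>Q. Q \<in> c \<Longrightarrow> card (conjugate G g Q) = card Q"
    using card_conj[OF g] X_carrier cX by blast
  have s1: "{Q \<in> conjugate G g ` c. card Q \<le> a} = conjugate G g ` {Q \<in> c. card Q \<le> a}"
    using cc by auto
  have s2: "{Q \<in> conjugate G g ` c. b \<le> card Q} = conjugate G g ` {Q \<in> c. b \<le> card Q}"
    using cc by auto
  have s3: "om ` conjugate G g ` {Q \<in> c. card Q \<le> a} = conjugate G g ` om ` {Q \<in> c. card Q \<le> a}"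
    unfolding image_comp using om_conj[OF g] cX by (auto intro!: image_cong)
  show ?thesis unfolding hh_def chain_act_def s1 s2 s3 image_Un by simp
qed

lemma hh_mono: "c \<subseteq> d \<Longrightarrow> hh om a b c \<subseteq> hh om a b d"
  unfolding hh_def by blast

lemma hh_good:
  assumes ab: "a \<le> b" "b \<le> Suc a"
  shows "good X (hh om a b)"
  unfolding good_def using hh_chain[OF _ ab] hh_equiv hh_mono by blast

lemma hh_zero: "c \<in> chains_poset X \<Longrightarrow> hh om 0 0 c = c"
proof -
  assume c: "c \<in> chains_poset X"
  have cX: "c \<subseteq> X" using c by (simp add: chains_poset_def)
  have "\<And>Q. Q \<in> c \<Longrightarrow> 0 < card Q" using X_card_pos cX by (meson subsetD)
  then have e1: "{Q \<in> c. card Q \<le> 0} = {}" by fastforce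
  have e2: "{Q \<in> c. 0 \<le> card Q} = c" by simp
  show ?thesis unfolding hh_def e1 e2 by simp
qed

lemma hh_top: "c \<in> chains_poset X \<Longrightarrow> hh om (Suc (card (carrier G))) (Suc (card (carrier G))) c = om ` c"
proof -
  assume c: "c \<in> chains_poset X"
  have cX: "c \<subseteq> X" using c by (simp add: chains_poset_def)
  have "\<And>Q. Q \<in> c \<Longrightarrow> card Q \<le> card (carrier G)" using X_card_le cX by (meson subsetD)
  then have e1: "{Q \<in> c. card Q \<le> Suc (card (carrier G))} = c"
    and e2: "{Q \<in> c. Suc (card (carrier G)) \<le> card Q} = {}"
    by fastforce+
  show ?thesis unfolding hh_def e1 e2 by simp
qed

end


context orb_setup begin

abbreviation "TT \<equiv> orbit_space G X"

lemma htpy_id_hh: "homotopic_with (\<lambda>_. True) TT TT id (\<lambda>ob. hh om k k ` ob)"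
proof (induction k)
  case 0
  have "homotopic_with (\<lambda>_. True) TT TT (\<lambda>ob. (\<lambda>c. c) ` ob) (\<lambda>ob. hh om 0 0 ` ob)"
    by (rule good_homotopic[OF X good_id hh_good]) (auto simp: hh_zero)
  then show ?case by (simp add: id_def)
next
  case (Suc k)
  have "homotopic_with (\<lambda>_. True) TT TT (\<lambda>ob. hh om k (Suc k) ` ob) (\<lambda>ob. hh om k k ` ob)"
    by (rule good_homotopic[OF X hh_good hh_good]) (auto simp: hh_def)
  then have h1: "homotopic_with (\<lambda>_. True) TT TT (\<lambda>ob. hh om k k ` ob) (\<lambda>ob. hh om k (Suc k) ` ob)"
    by (rule homotopic_with_symD)
  have h2: "homotopic_with (\<lambda>_. True) TT TT (\<lambda>ob. hh om k (Suc k) ` ob) (\<lambda>ob. hh om (Suc k) (Suc k) ` ob)"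
    by (rule good_homotopic[OF X hh_good hh_good]) (auto simp: hh_def)
  show ?case using homotopic_with_trans[OF Suc.IH homotopic_with_trans[OF h1 h2]] .
qed

lemma omc_good: "good X (\<lambda>c. om ` c)"
  unfolding good_def
proof (intro conjI ballI impI)
  fix d assume d: "d \<in> chains_poset X"
  have "hh om (Suc (card (carrier G))) (Suc (card (carrier G))) d \<in> chains_poset X"
    using hh_chain[OF d] by simp
  then show "om ` d \<in> chains_poset X" using hh_top[OF d] by simp
next
  fix g d assume g: "g \<in> carrier G" and d: "d \<in> chains_poset X"
  have dX: "d \<subseteq> X" using d by (simp add: chains_poset_def)
  show "om ` chain_act G g d = chain_act G g (om ` d)"
    unfolding chain_act_def image_comp using om_conj[OF g] dX by (auto intro!: image_cong)
next
  fix c d :: "'a set set" assume "c \<subseteq> d"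
  then show "om ` c \<subseteq> om ` d" by (rule image_mono)
qed

lemma htpy_id_om: "homotopic_with (\<lambda>_. True) TT TT id (\<lambda>ob. (\<lambda>c. om ` c) ` ob)"
proof -
  let ?N = "Suc (card (carrier G))"
  have "homotopic_with (\<lambda>_. True) TT TT (\<lambda>ob. hh om ?N ?N ` ob) (\<lambda>ob. (\<lambda>c. om ` c) ` ob)"
    by (rule good_homotopic[OF X hh_good omc_good]) (auto simp: hh_top)
  then show ?thesis using homotopic_with_trans[OF htpy_id_hh] by blast
qed

lemma chains_YX: "chains_poset Y \<subseteq> chains_poset X"
  using YX unfolding chains_poset_def by auto

lemma orbit_set_YX: "orbit_set G Y \<subseteq> orbit_set G X"
  unfolding orbit_set_eq using chains_YX by blast

lemma chain_into_E:
  assumes d: "d \<in> chains_poset Y"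
  shows "\<exists>a\<in>carrier G. \<forall>Q\<in>chain_act G a d. Q \<subseteq> E"
proof -
  have dX: "d \<in> chains_poset X" using d chains_YX by blast
  have d1: "d \<noteq> {}" "d \<subseteq> Y" "\<forall>A\<in>d. \<forall>B\<in>d. A \<subseteq> B \<or> B \<subseteq> A"
    using d by (auto simp: chains_poset_def)
  obtain m where m: "m \<in> d" "\<forall>Q\<in>d. Q \<subseteq> m" using chain_max[OF chain_finite[OF dX] d1(1) d1(3)] by blast
  have "m \<in> Y" using m(1) d1(2) by blast
  then obtain a where a: "a \<in> carrier G" "conjugate G a m \<subseteq> E" using intoE by blast
  have "\<forall>Q\<in>chain_act G a d. Q \<subseteq> E"
  proof
    fix Q assume "Q \<in> chain_act G a d"
    then obtain Q0 where Q0: "Q0 \<in> d" "Q = conjugate G a Q0" unfolding chain_act_def by blast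
    have "Q0 \<subseteq> m" using m(2) Q0(1) by blast
    then have "Q \<subseteq> conjugate G a m" using conj_mono Q0(2) by simp
    then show "Q \<subseteq> E" using a(2) by (rule order_trans)
  qed
  then show ?thesis using a(1) by blast
qed

definition FF :: "'a set set set \<Rightarrow> 'a set set set" where
  "FF ob = {chain_act G g (c \<union> {E}) | g c. g \<in> carrier G \<and> c \<in> ob \<and> (\<forall>Q\<in>c. Q \<subseteq> E)}"

lemma cE_chain:
  assumes c: "c \<in> chains_poset Y" and cE: "\<forall>Q\<in>c. Q \<subseteq> E"
  shows "c \<union> {E} \<in> chains_poset Y"
  using c cE EY unfolding chains_poset_def by blast

lemma chain_act_union_E:
  assumes n: "n \<in> carrier G" "conjugate G n E = E"
  shows "chain_act G n (c \<union> {E}) = chain_act G n c \<union> {E}"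
  unfolding chain_act_def using n(2) by simp

lemma fuse_chains:
  assumes c0: "c0 \<in> chains_poset Y" and c1: "c1 \<in> orbc G c0" and c: "c \<in> orbc G c0"
    and c1E: "\<forall>Q\<in>c1. Q \<subseteq> E" and cE: "\<forall>Q\<in>c. Q \<subseteq> E"
  shows "\<exists>n\<in>carrier G. chain_act G n (c1 \<union> {E}) = c \<union> {E}"
proof -
  have c1Y: "c1 \<in> chains_poset Y" using orbc_mem_chain[OF Y c0 c1] .
  have "orbc G c1 = orbc G c0" using orbc_eq[OF Y c0 c1] .
  then have "c \<in> orbc G c1" using c by simp
  then obtain h where h: "h \<in> carrier G" "c = chain_act G h c1" unfolding orbc_def by blast
  have c1X: "c1 \<in> chains_poset X" using c1Y chains_YX by blast
  have d1: "c1 \<noteq> {}" "c1 \<subseteq> Y" "\<forall>A\<in>c1. \<forall>B\<in>c1. A \<subseteq> B \<or> B \<subseteq> A"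
    using c1Y by (auto simp: chains_poset_def)
  obtain m where m: "m \<in> c1" "\<forall>Q\<in>c1. Q \<subseteq> m" using chain_max[OF chain_finite[OF c1X] d1(1) d1(3)] by blast
  have mY: "m \<in> Y" using m(1) d1(2) by blast
  have mE: "m \<subseteq> E" using c1E m(1) by blast
  have "conjugate G h m \<in> c" using h(2) m(1) unfolding chain_act_def by blast
  then have hmE: "conjugate G h m \<subseteq> E" using cE by blast
  obtain n where n: "n \<in> carrier G" "conjugate G n E = E" "\<forall>Q. Q \<subseteq> m \<longrightarrow> conjugate G n Q = conjugate G h Q"
    using fus[OF mY mE h(1) hmE] by blast
  have "chain_act G n c1 = chain_act G h c1"
    unfolding chain_act_def using n(3) m(2) by (auto intro!: image_cong)
  then have "chain_act G n (c1 \<union> {E}) = c \<union> {E}" using chain_act_union_E[OF n(1,2)] h(2) by simp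
  then show ?thesis using n(1) by blast
qed

lemma FF_eq:
  assumes c0: "c0 \<in> chains_poset Y" and c1: "c1 \<in> orbc G c0" and c1E: "\<forall>Q\<in>c1. Q \<subseteq> E"
  shows "FF (orbc G c0) = orbc G (c1 \<union> {E})"
proof
  show "FF (orbc G c0) \<subseteq> orbc G (c1 \<union> {E})"
  proof
    fix z assume "z \<in> FF (orbc G c0)"
    then obtain g c where gc: "g \<in> carrier G" "c \<in> orbc G c0" "\<forall>Q\<in>c. Q \<subseteq> E" "z = chain_act G g (c \<union> {E})"
      unfolding FF_def by blast
    obtain n where n: "n \<in> carrier G" "chain_act G n (c1 \<union> {E}) = c \<union> {E}"
      using fuse_chains[OF c0 c1 gc(2) c1E gc(3)] by blast
    have c1Y: "c1 \<in> chains_poset Y" using orbc_mem_chain[OF Y c0 c1] .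
    have cEY: "c1 \<union> {E} \<in> chains_poset Y" using cE_chain[OF c1Y c1E] .
    have "z = chain_act G (g \<otimes> n) (c1 \<union> {E})"
      using chain_act_mult[OF gc(1) n(1) chains_carrier[OF Y cEY]] n(2) gc(4) by simp
    then show "z \<in> orbc G (c1 \<union> {E})" unfolding orbc_def using gc(1) n(1) by blast
  qed
  show "orbc G (c1 \<union> {E}) \<subseteq> FF (orbc G c0)"
  proof
    fix z assume "z \<in> orbc G (c1 \<union> {E})"
    then obtain g where g: "g \<in> carrier G" "z = chain_act G g (c1 \<union> {E})" unfolding orbc_def by blast
    show "z \<in> FF (orbc G c0)" unfolding FF_def
      apply (rule CollectI)
      apply (rule exI[of _ g], rule exI[of _ c1])
      apply (intro conjI)
         apply (rule g(2))
        apply (rule g(1))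
       apply (rule c1)
      apply (rule c1E)
      done
  qed
qed

lemma FF_facts:
  assumes ob: "ob \<in> orbit_set G Y"
  shows "FF ob \<in> orbit_set G Y" "orbit_le ob (FF ob)" "orbit_le (orbc G {E}) (FF ob)"
proof -
  obtain c0 where c0: "c0 \<in> chains_poset Y" "ob = orbc G c0" using ob unfolding orbit_set_eq by blast
  obtain a where a: "a \<in> carrier G" "\<forall>Q\<in>chain_act G a c0. Q \<subseteq> E" using chain_into_E[OF c0(1)] by blast
  define c1 where "c1 = chain_act G a c0"
  have c1o: "c1 \<in> orbc G c0" unfolding c1_def orbc_def using a(1) by blast
  have c1E: "\<forall>Q\<in>c1. Q \<subseteq> E" using a(2) unfolding c1_def .
  have c1Y: "c1 \<in> chains_poset Y" using orbc_mem_chain[OF Y c0(1) c1o] .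
  have cEY: "c1 \<union> {E} \<in> chains_poset Y" using cE_chain[OF c1Y c1E] .
  have F: "FF ob = orbc G (c1 \<union> {E})" using FF_eq[OF c0(1) c1o c1E] c0(2) by simp
  show "FF ob \<in> orbit_set G Y" unfolding F orbit_set_eq using cEY by blast
  have self: "c1 \<union> {E} \<in> FF ob" unfolding F using orbc_self[OF Y cEY] .
  show "orbit_le ob (FF ob)" unfolding orbit_le_def using c1o c0(2) self by blast
  have EcY: "{E} \<in> chains_poset Y" using EY unfolding chains_poset_def by blast
  show "orbit_le (orbc G {E}) (FF ob)" unfolding orbit_le_def using orbc_self[OF Y EcY] self by blast
qed

lemma FF_mono:
  assumes o1: "o1 \<in> orbit_set G Y" and o2: "o2 \<in> orbit_set G Y" and le: "orbit_le o1 o2"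
  shows "orbit_le (FF o1) (FF o2)"
proof -
  obtain c d where cd: "c \<in> o1" "d \<in> o2" "c \<subseteq> d" using le unfolding orbit_le_def by blast
  obtain c0 where c0: "c0 \<in> chains_poset Y" "o1 = orbc G c0" using o1 unfolding orbit_set_eq by blast
  obtain d0 where d0: "d0 \<in> chains_poset Y" "o2 = orbc G d0" using o2 unfolding orbit_set_eq by blast
  have dY: "d \<in> chains_poset Y" using orbc_mem_chain[OF Y d0(1)] cd(2) d0(2) by simp
  obtain a where a: "a \<in> carrier G" "\<forall>Q\<in>chain_act G a d. Q \<subseteq> E" using chain_into_E[OF dY] by blast
  have c'o: "chain_act G a c \<in> o1" using orbc_act[OF Y c0(1) _ a(1)] cd(1) c0(2) by simp
  have d'o: "chain_act G a d \<in> o2" using orbc_act[OF Y d0(1) _ a(1)] cd(2) d0(2) by simp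
  have sub: "chain_act G a c \<subseteq> chain_act G a d" unfolding chain_act_def using cd(3) by (rule image_mono)
  then have c'E: "\<forall>Q\<in>chain_act G a c. Q \<subseteq> E" using a(2) by blast
  have cY: "chain_act G a c \<in> chains_poset Y" using orbc_mem_chain[OF Y c0(1)] c'o c0(2) by simp
  have d'Y: "chain_act G a d \<in> chains_poset Y" using orbc_mem_chain[OF Y d0(1)] d'o d0(2) by simp
  have "chain_act G a c \<union> {E} \<in> FF o1"
    unfolding FF_def
    apply (rule CollectI)
    apply (rule exI[of _ \<one>], rule exI[of _ "chain_act G a c"])
    apply (intro conjI)
       apply (rule sym[OF chain_act_one[OF chains_carrier[OF Y cE_chain[OF cY c'E]]]])
      apply (rule one_closed)
     apply (rule c'o)
    apply (rule c'E)
    done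
  moreover have "chain_act G a d \<union> {E} \<in> FF o2"
    unfolding FF_def
    apply (rule CollectI)
    apply (rule exI[of _ \<one>], rule exI[of _ "chain_act G a d"])
    apply (intro conjI)
       apply (rule sym[OF chain_act_one[OF chains_carrier[OF Y cE_chain[OF d'Y a(2)]]]])
      apply (rule one_closed)
     apply (rule d'o)
    apply (rule a(2))
    done
  moreover have "chain_act G a c \<union> {E} \<subseteq> chain_act G a d \<union> {E}" using sub by (rule Un_mono) simp
  ultimately show ?thesis unfolding orbit_le_def by (intro bexI)
qed

theorem orbit_contractible: "contractible_space (orbit_space G X)"
proof -
  let ?Om = "\<lambda>ob. (\<lambda>c. om ` c) ` ob"
  have OmY: "\<And>ob. ob \<in> orbit_set G X \<Longrightarrow> ?Om ob \<in> orbit_set G Y"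
  proof -
    fix ob assume ob: "ob \<in> orbit_set G X"
    show "?Om ob \<in> orbit_set G Y"
    proof (rule induced_maps[OF X Y _ _ ob])
      fix d assume d: "d \<in> chains_poset X"
      have c1: "om ` d \<in> chains_poset X" using bspec[OF omc_good[unfolded good_def, THEN conjunct1] d] .
      have dX: "d \<subseteq> X" using d by (simp add: chains_poset_def)
      have c2: "om ` d \<subseteq> Y" using om_Y dX by (meson image_subsetI subsetD)
      show "om ` d \<in> chains_poset Y" using c1 c2 unfolding chains_poset_def by simp
    next
      fix g d assume g: "g \<in> carrier G" and d: "d \<in> chains_poset X"
      show "om ` chain_act G g d = chain_act G g (om ` d)"
        using bspec[OF bspec[OF omc_good[unfolded good_def, THEN conjunct2, THEN conjunct1] g] d] .
    qed
  qed
  have Ommono: "\<And>o1 o2. o1 \<in> orbit_set G X \<Longrightarrow> o2 \<in> orbit_set G X \<Longrightarrow> orbit_le o1 o2 \<Longrightarrow>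
      orbit_le (?Om o1) (?Om o2)"
    by (rule good_mono[OF X omc_good])
  define K where "K = orbc G {E}"
  have EcX: "{E} \<in> chains_poset X" using EY YX unfolding chains_poset_def by blast
  have KX: "K \<in> orbit_set G X" unfolding K_def orbit_set_eq using EcX by blast
  have h1: "homotopic_with (\<lambda>_. True) TT TT ?Om (\<lambda>ob. FF (?Om ob))"
    unfolding orbit_space_def
  proof (rule homotopic_poset_le)
    fix x assume x: "x \<in> orbit_set G X"
    show "?Om x \<in> orbit_set G X" using OmY[OF x] orbit_set_YX by blast
    show "FF (?Om x) \<in> orbit_set G X" using FF_facts(1)[OF OmY[OF x]] orbit_set_YX by blast
    show "orbit_le (?Om x) (FF (?Om x))" using FF_facts(2)[OF OmY[OF x]] .
  next
    fix x y assume x: "x \<in> orbit_set G X" and y: "y \<in> orbit_set G X" and le: "orbit_le x y"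
    show "orbit_le (?Om x) (?Om y)" using Ommono[OF x y le] .
    show "orbit_le (FF (?Om x)) (FF (?Om y))" using FF_mono[OF OmY[OF x] OmY[OF y] Ommono[OF x y le]] .
  qed auto
  have h2: "homotopic_with (\<lambda>_. True) TT TT (\<lambda>ob. K) (\<lambda>ob. FF (?Om ob))"
    unfolding orbit_space_def
  proof (rule homotopic_poset_le)
    fix x assume x: "x \<in> orbit_set G X"
    show "K \<in> orbit_set G X" using KX .
    show "FF (?Om x) \<in> orbit_set G X" using FF_facts(1)[OF OmY[OF x]] orbit_set_YX by blast
    show "orbit_le K (FF (?Om x))" unfolding K_def using FF_facts(3)[OF OmY[OF x]] .
  next
    fix x y assume x: "x \<in> orbit_set G X" and y: "y \<in> orbit_set G X" and le: "orbit_le x y"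
    show "orbit_le K K" using orbit_le_refl[OF X KX] .
    show "orbit_le (FF (?Om x)) (FF (?Om y))" using FF_mono[OF OmY[OF x] OmY[OF y] Ommono[OF x y le]] .
  qed auto
  have "homotopic_with (\<lambda>_. True) TT TT id (\<lambda>ob. K)"
    using homotopic_with_trans[OF htpy_id_om homotopic_with_trans[OF h1 homotopic_with_symD[OF h2]]] .
  then show ?thesis unfolding contractible_space_def by blast
qed

end


lemma cont_mono_subset:
  assumes f: "continuous_map (poset_topology X (\<subseteq>)) (poset_topology X (\<subseteq>)) f"
    and a: "a \<in> X" and b: "b \<in> X" and ab: "a \<subseteq> b"
  shows "f a \<subseteq> f b"
proof -
  have fb: "f b \<in> X" using f b unfolding continuous_map_def topspace_poset by blast
  define U where "U = {z \<in> X. z \<subseteq> f b}"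
  have "openin (poset_topology X (\<subseteq>)) U" unfolding openin_poset U_def by auto
  then have "openin (poset_topology X (\<subseteq>)) {x \<in> X. f x \<in> U}"
    using f unfolding continuous_map_def topspace_poset by blast
  moreover have "b \<in> {x \<in> X. f x \<in> U}" using b fb unfolding U_def by simp
  ultimately have "a \<in> {x \<in> X. f x \<in> U}" using a ab unfolding openin_poset by blast
  then show ?thesis unfolding U_def by simp
qed

context group begin

lemma cyclic_Ap:
  assumes p: "prime p" and x: "x \<in> carrier G" "x \<noteq> \<one>" "x [^] p = \<one>"
  shows "generate G {x} \<in> Ap G p"
proof -
  have ordp: "ord x = p"
  proof -
    have "ord x dvd p" using pow_eq_id[OF x(1)] x(3) by simp
    moreover have "ord x \<noteq> 1" using ord_eq_1[OF x(1)] x(2) by simp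
    ultimately show ?thesis using p by (metis prime_nat_iff)
  qed
  have sub: "subgroup (generate G {x}) G" using generate_is_subgroup x(1) by simp
  have card: "card (generate G {x}) = p" using generate_pow_card[OF x(1)] ordp by simp
  have ord0: "ord x \<noteq> 0" using ordp p by (metis prime_gt_0_nat not_gr0)
  have gen: "generate G {x} = {x [^] k | k. k \<in> (UNIV :: nat set)}"
    using generate_pow_nat[OF x(1) ord0] .
  have "x \<in> generate G {x}" by (rule generate.incl) simp
  then have nt: "generate G {x} \<noteq> {\<one>}" using x(2) by blast
  have ab: "\<forall>a\<in>generate G {x}. \<forall>b\<in>generate G {x}. a \<otimes> b = b \<otimes> a"
  proof (intro ballI)
    fix a b assume "a \<in> generate G {x}" "b \<in> generate G {x}"
    then obtain i j where "a = x [^] (i::nat)" "b = x [^] (j::nat)" unfolding gen by blast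
    then show "a \<otimes> b = b \<otimes> a" using x(1) by (simp add: nat_pow_mult add.commute)
  qed
  have ex: "\<forall>a\<in>generate G {x}. a [^] p = \<one>"
  proof
    fix a assume "a \<in> generate G {x}"
    then obtain i where "a = x [^] (i::nat)" unfolding gen by blast
    then have "a [^] p = (x [^] p) [^] i" using x(1) by (simp add: nat_pow_pow mult.commute)
    then show "a [^] p = \<one>" using x(3) by simp
  qed
  have "is_p_subgroup G p (generate G {x})" unfolding is_p_subgroup_def using sub card
    by (metis power_one_right)
  then show ?thesis using nt ab ex by (simp add: Ap_def Sp_def)
qed

lemma sdr_imp_comm:
  assumes p: "prime p" and fin: "finite (carrier G)"
    and sdr: "strong_deformation_retract (subgroup_space (Sp G p)) (Ap G p)"
    and P: "is_p_subgroup G p P"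
  shows "comm_p_elems G p P"
  unfolding comm_p_elems_def
proof (intro ballI impI)
  fix x y assume xP: "x \<in> P" and yP: "y \<in> P" and xp: "x [^] p = \<one>" and yp: "y [^] p = \<one>"
  have Ps: "subgroup P G" using P by (simp add: is_p_subgroup_def)
  have xc: "x \<in> carrier G" using subgroup.mem_carrier[OF Ps xP] .
  have yc: "y \<in> carrier G" using subgroup.mem_carrier[OF Ps yP] .
  show "x \<otimes> y = y \<otimes> x"
  proof (cases "x = \<one> \<or> y = \<one>")
    case True then show ?thesis using xc yc by auto
  next
    case False
    then have x1: "x \<noteq> \<one>" and y1: "y \<noteq> \<one>" by auto
    have PSp: "P \<in> Sp G p" using P xP x1 unfolding Sp_def by blast
    obtain r where r: "continuous_map (subgroup_space (Sp G p)) (subtopology (subgroup_space (Sp G p)) (Ap G p)) r"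
      "\<forall>E\<in>Ap G p. r E = E"
      using sdr unfolding strong_deformation_retract_def by blast
    have rc: "continuous_map (poset_topology (Sp G p) (\<subseteq>)) (poset_topology (Sp G p) (\<subseteq>)) r"
      using continuous_map_into_fulltopology[OF r(1)] unfolding subgroup_space_def .
    have rA: "r P \<in> Ap G p"
      using r(1) PSp unfolding continuous_map_def subgroup_space_def topspace_subtopology topspace_poset
      by blast
    have AS: "\<And>E. E \<in> Ap G p \<Longrightarrow> E \<in> Sp G p" unfolding Ap_def by blast
    have in_rP: "z \<in> r P" if zP: "z \<in> P" and z1: "z \<noteq> \<one>" and zp: "z [^] p = \<one>" for z
    proof -
      have zc: "z \<in> carrier G" using subgroup.mem_carrier[OF Ps zP] .
      have gA: "generate G {z} \<in> Ap G p" using cyclic_Ap[OF p zc z1 zp] .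
      have gP: "generate G {z} \<subseteq> P" using generate_subgroup_incl[OF _ Ps] zP by simp
      have "r (generate G {z}) \<subseteq> r P" using cont_mono_subset[OF rc AS[OF gA] PSp gP] .
      then have "generate G {z} \<subseteq> r P" using r(2) gA by simp
      moreover have "z \<in> generate G {z}" by (rule generate.incl) simp
      ultimately show ?thesis by blast
    qed
    have "x \<in> r P" using in_rP[OF xP x1 xp] .
    moreover have "y \<in> r P" using in_rP[OF yP y1 yp] .
    ultimately show ?thesis using rA unfolding Ap_def by blast
  qed
qed

end


context group begin

lemma Sp_closed: "conj_closed (Sp G p)"
  unfolding conj_closed_def
proof (intro conjI ballI)
  fix Q assume "Q \<in> Sp G p"
  then have Qs: "subgroup Q G" by (simp add: Sp_def is_p_subgroup_def)
  show "Q \<subseteq> carrier G" using subgroup.subset[OF Qs] .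
  show "Q \<noteq> {}" using subgroup.one_closed[OF Qs] by blast
next
  fix g Q assume "g \<in> carrier G" "Q \<in> Sp G p"
  then show "conjugate G g Q \<in> Sp G p" by (rule Sp_conj)
qed

lemma Ap_closed: "conj_closed (Ap G p)"
  unfolding conj_closed_def
proof (intro conjI ballI)
  fix Q assume "Q \<in> Ap G p"
  then have Qs: "subgroup Q G" by (simp add: Ap_def Sp_def is_p_subgroup_def)
  show "Q \<subseteq> carrier G" using subgroup.subset[OF Qs] .
  show "Q \<noteq> {}" using subgroup.one_closed[OF Qs] by blast
next
  fix g Q assume "g \<in> carrier G" "Q \<in> Ap G p"
  then show "conjugate G g Q \<in> Ap G p" by (rule Ap_conj)
qed

lemma sylow_in_Sp:
  assumes p: "prime p" and fin: "finite (carrier G)" and dvd: "p dvd order G"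
    and S: "sylow_p_subgroup G p S"
  shows "S \<in> Sp G p"
proof -
  have cS: "card S = p ^ multiplicity p (order G)" using S by (simp add: sylow_p_subgroup_def)
  have "p ^ 1 dvd order G" using dvd by simp
  then have m1: "1 \<le> multiplicity p (order G)"
    using multiplicity_geI[OF order_pos[OF fin] prime_not_unit[OF p]] by blast
  have "p ^ 1 \<le> p ^ multiplicity p (order G)"
    using power_increasing[OF m1] prime_ge_1_nat[OF p] by blast
  then have "2 \<le> card S" using cS prime_ge_2_nat[OF p] by simp
  then have "S \<noteq> {\<one>}" by auto
  then show ?thesis using sylow_is_p[OF S] by (simp add: Sp_def)
qed

lemma omega_PhiE:
  assumes p: "prime p" and fin: "finite (carrier G)" and S: "sylow_p_subgroup G p S"
    and T: "is_p_subgroup G p T" and ET: "omega G p S \<subseteq> T"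
  shows "omega G p T = omega G p S"
proof -
  obtain S' where S': "sylow_p_subgroup G p S'" "T \<subseteq> S'" using sylow_containing[OF p fin T] by blast
  obtain h where h: "h \<in> carrier G" "conjugate G h S = S'" using sylow_conjugate[OF p fin S' (1) S] by blast
  have Ss: "subgroup S G" using S by (simp add: sylow_p_subgroup_def)
  have Sc: "S \<subseteq> carrier G" using subgroup.subset[OF Ss] .
  have S's: "subgroup S' G" using S'(1) by (simp add: sylow_p_subgroup_def)
  have finS': "finite S'" using finite_subset[OF subgroup.subset[OF S's] fin] .
  have e1: "omega G p S' = conjugate G h (omega G p S)" using omega_conj[OF h(1) Sc] h(2) by simp
  have Oc: "omega G p S \<subseteq> carrier G" using omega_sub Sc by (rule order_trans)
  have c1: "card (omega G p S') = card (omega G p S)" using e1 card_conj[OF h(1) Oc] by simp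
  have s1: "omega G p S \<subseteq> omega G p T" using ET unfolding omega_def by blast
  have s2: "omega G p T \<subseteq> omega G p S'" using omega_mono[OF S'(2)] .
  have fin2: "finite (omega G p S')" using finite_subset[OF omega_sub finS'] .
  have "omega G p S = omega G p S'"
    using card_subset_eq[OF fin2 order_trans[OF s1 s2]] c1 by metis
  then show ?thesis using s1 s2 by blast
qed

lemma contr_Sp_Ap:
  assumes p: "prime p" and fin: "finite (carrier G)" and dvd: "p dvd order G"
    and hyp: "\<And>P. is_p_subgroup G p P \<Longrightarrow> comm_p_elems G p P"
  shows "contractible_space (orbit_space G (Ap G p)) \<and> contractible_space (orbit_space G (Sp G p))"
proof -
  obtain S where S: "sylow_p_subgroup G p S" using sylow_exists[OF p fin] by blast
  have SSp: "S \<in> Sp G p" using sylow_in_Sp[OF p fin dvd S] .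
  have Ss: "subgroup S G" using S by (simp add: sylow_p_subgroup_def)
  have Sc: "S \<subseteq> carrier G" using subgroup.subset[OF Ss] .
  define E where "E = omega G p S"
  have EA: "E \<in> Ap G p" unfolding E_def using omega_Ap[OF p fin SSp hyp[OF sylow_is_p[OF S]]] .
  have AS: "Ap G p \<subseteq> Sp G p" unfolding Ap_def by blast
  have Spc: "\<And>Q. Q \<in> Sp G p \<Longrightarrow> Q \<subseteq> carrier G"
    using Sp_closed unfolding conj_closed_def by blast
  have intoE: "\<exists>g\<in>carrier G. conjugate G g Q \<subseteq> E" if Q: "Q \<in> Ap G p" for Q
  proof -
    have Qp: "is_p_subgroup G p Q" using Q by (simp add: Ap_def Sp_def)
    obtain g where g: "g \<in> carrier G" "conjugate G g Q \<subseteq> S" using sylow_conj_into[OF p fin S Qp] by blast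
    have "conjugate G g Q \<in> Ap G p" using Ap_conj[OF g(1) Q] .
    then have "conjugate G g Q \<subseteq> E" unfolding E_def using Ap_sub_omega g(2) by blast
    then show ?thesis using g(1) by blast
  qed
  have fus: "\<exists>n\<in>carrier G. conjugate G n E = E \<and> (\<forall>Q. Q \<subseteq> M \<longrightarrow> conjugate G n Q = conjugate G g Q)"
    if "M \<in> Ap G p" "M \<subseteq> E" "g \<in> carrier G" "conjugate G g M \<subseteq> E" for M g
  proof (rule fusion[OF p fin _ _ _ _ _ that(2-4), where Phi = "omega G p"])
    show "is_p_subgroup G p E" using EA by (simp add: Ap_def Sp_def)
    show "\<forall>x\<in>E. \<forall>y\<in>E. x \<otimes> y = y \<otimes> x" using EA by (simp add: Ap_def)
  next
    fix h T assume h: "h \<in> carrier G" and T: "is_p_subgroup G p T"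
    have "T \<subseteq> carrier G" using T subgroup.subset unfolding is_p_subgroup_def by blast
    then show "omega G p (conjugate G h T) = conjugate G h (omega G p T)" using omega_conj[OF h] by simp
  next
    fix T assume T: "is_p_subgroup G p T" and "E \<subseteq> T"
    then show "omega G p T = E" unfolding E_def using omega_PhiE[OF p fin S T] by simp
  next
    fix T assume T: "is_p_subgroup G p T"
    have "T \<subseteq> carrier G" using T subgroup.subset unfolding is_p_subgroup_def by blast
    then show "omega G p T \<subseteq> carrier G" using omega_sub by (rule order_trans[rotated])
  qed
  have cA: "contractible_space (orbit_space G (Ap G p))"
  proof -
    interpret A: orb_setup G "Ap G p" "Ap G p" "\<lambda>Q. Q" E
      by (unfold_locales) (auto simp: fin Ap_closed EA intro: intoE fus)
    show ?thesis by (rule A.orbit_contractible)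
  qed
  have cS: "contractible_space (orbit_space G (Sp G p))"
  proof -
    have omY: "omega G p Q \<in> Ap G p" if "Q \<in> Sp G p" for Q
    proof -
      have "is_p_subgroup G p Q" using that by (simp add: Sp_def)
      then show ?thesis using omega_Ap[OF p fin that hyp] by blast
    qed
    interpret B: orb_setup G "Sp G p" "Ap G p" "omega G p" E
    proof (unfold_locales)
      show "finite (carrier G)" by (rule fin)
      show "conj_closed (Sp G p)" by (rule Sp_closed)
      show "conj_closed (Ap G p)" by (rule Ap_closed)
      show "Ap G p \<subseteq> Sp G p" by (rule AS)
      show "\<And>Q. Q \<in> Sp G p \<Longrightarrow> omega G p Q \<in> Ap G p" by (rule omY)
      show "\<And>Q. Q \<in> Sp G p \<Longrightarrow> omega G p Q \<subseteq> Q" by (rule omega_sub)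
      show "\<And>Q Q'. Q \<in> Sp G p \<Longrightarrow> Q' \<in> Sp G p \<Longrightarrow> Q \<subseteq> Q' \<Longrightarrow> omega G p Q \<subseteq> omega G p Q'"
        by (rule omega_mono)
      show "\<And>g Q. g \<in> carrier G \<Longrightarrow> Q \<in> Sp G p \<Longrightarrow> omega G p (conjugate G g Q) = conjugate G g (omega G p Q)"
        using omega_conj Spc by blast
      show "E \<in> Ap G p" by (rule EA)
      show "\<And>Q. Q \<in> Ap G p \<Longrightarrow> \<exists>g\<in>carrier G. conjugate G g Q \<subseteq> E" by (rule intoE)
      show "\<And>M g. M \<in> Ap G p \<Longrightarrow> M \<subseteq> E \<Longrightarrow> g \<in> carrier G \<Longrightarrow> conjugate G g M \<subseteq> E \<Longrightarrow>
          \<exists>n\<in>carrier G. conjugate G n E = E \<and> (\<forall>Q. Q \<subseteq> M \<longrightarrow> conjugate G n Q = conjugate G g Q)"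
        by (rule fus)
    qed
    show ?thesis by (rule B.orbit_contractible)
  qed
  show ?thesis using cA cS by blast
qed

end


definition IS :: "('g, 'b) monoid_scheme \<Rightarrow> nat \<Rightarrow> 'g set \<Rightarrow> 'g set" where
  "IS G p P = \<Inter>{S. sylow_p_subgroup G p S \<and> P \<subseteq> S}"

context group begin

lemma inv_cancel_left'': "x \<in> carrier G \<Longrightarrow> z \<in> carrier G \<Longrightarrow> x \<otimes> (inv x \<otimes> z) = z"
  by (simp add: m_assoc[symmetric])

lemma normalizer_iff:
  assumes "P \<subseteq> carrier G"
  shows "g \<in> normalizer G P \<longleftrightarrow> g \<in> carrier G \<and> conjugate G g P = P"
  using assms unfolding normalizer_def stabilizer_def conjugate_def by auto

lemma IS_sub: "sylow_p_subgroup G p S \<Longrightarrow> P \<subseteq> S \<Longrightarrow> IS G p P \<subseteq> S"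
  unfolding IS_def by blast

lemma IS_ge: "P \<subseteq> IS G p P"
  unfolding IS_def by blast

lemma IS_mono: "P \<subseteq> Q \<Longrightarrow> IS G p P \<subseteq> IS G p Q"
  unfolding IS_def by blast

lemma IS_idem: "IS G p (IS G p P) = IS G p P"
proof -
  have "{S. sylow_p_subgroup G p S \<and> IS G p P \<subseteq> S} = {S. sylow_p_subgroup G p S \<and> P \<subseteq> S}"
    using IS_sub IS_ge by (meson order_trans)
  then show ?thesis unfolding IS_def[of G p "IS G p P"] by (simp add: IS_def)
qed

context
  fixes p assumes p: "prime p" and fin: "finite (carrier G)"
    and ab: "\<And>S. sylow_p_subgroup G p S \<Longrightarrow> \<forall>x\<in>S. \<forall>y\<in>S. x \<otimes> y = y \<otimes> x"
begin

lemma IS_basic: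
  assumes P: "is_p_subgroup G p P"
  shows "is_p_subgroup G p (IS G p P)" "IS G p P \<subseteq> carrier G"
proof -
  obtain S0 where S0: "sylow_p_subgroup G p S0" "P \<subseteq> S0" using sylow_containing[OF p fin P] by blast
  have ne: "{S. sylow_p_subgroup G p S \<and> P \<subseteq> S} \<noteq> {}" using S0 by blast
  have "subgroup (IS G p P) G" unfolding IS_def
    by (rule subgroups_Inter[OF _ ne]) (auto simp: sylow_p_subgroup_def)
  then show "is_p_subgroup G p (IS G p P)"
    using p_sub_of_p_sub[OF p sylow_is_p[OF S0(1)] _ IS_sub[OF S0]] by blast
  have "S0 \<subseteq> carrier G" using S0(1) subgroup.subset unfolding sylow_p_subgroup_def by blast
  then show "IS G p P \<subseteq> carrier G" using IS_sub[OF S0] by (rule order_trans[rotated])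
qed

lemma sylow_normalizes:
  assumes S: "sylow_p_subgroup G p S" and PS: "P \<subseteq> S"
  shows "S \<subseteq> normalizer G P"
proof
  fix h assume h: "h \<in> S"
  have Sc: "S \<subseteq> carrier G" using S subgroup.subset unfolding sylow_p_subgroup_def by blast
  have Pc: "P \<subseteq> carrier G" using PS Sc by (rule order_trans)
  have hc: "h \<in> carrier G" using h Sc by (rule subsetD[rotated])
  have "h \<in> cent G P" unfolding cent_def using hc ab[OF S] h PS by blast
  then have "conjugate G h P = P" using cent_conj_fix[OF _ subset_refl Pc] by blast
  then show "h \<in> normalizer G P" using normalizer_iff[OF Pc] hc by simp
qed

lemma IS_norm:
  assumes P: "is_p_subgroup G p P"
  shows "IS G p P \<subseteq> normalizer G P"
proof -
  obtain S0 where S0: "sylow_p_subgroup G p S0" "P \<subseteq> S0" using sylow_containing[OF p fin P] by blast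
  show ?thesis using IS_sub[OF S0] sylow_normalizes[OF S0] by (rule order_trans)
qed

lemma IS_conj_sub:
  assumes g: "g \<in> carrier G" and P: "is_p_subgroup G p P"
  shows "conjugate G g (IS G p P) \<subseteq> IS G p (conjugate G g P)"
proof
  fix z assume "z \<in> conjugate G g (IS G p P)"
  then obtain y where y: "y \<in> IS G p P" "z = g \<otimes> y \<otimes> inv g" unfolding conj_img[OF g] by blast
  have Pc: "P \<subseteq> carrier G" using P subgroup.subset unfolding is_p_subgroup_def by blast
  show "z \<in> IS G p (conjugate G g P)" unfolding IS_def
  proof (rule InterI)
    fix S assume "S \<in> {S. sylow_p_subgroup G p S \<and> conjugate G g P \<subseteq> S}"
    then have S: "sylow_p_subgroup G p S" and gPS: "conjugate G g P \<subseteq> S" by auto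
    have Sc: "S \<subseteq> carrier G" using S subgroup.subset unfolding sylow_p_subgroup_def by blast
    have ig: "inv g \<in> carrier G" using g by simp
    have S': "sylow_p_subgroup G p (conjugate G (inv g) S)" using conj_sylow[OF ig S] .
    have "P \<subseteq> conjugate G (inv g) S"
      using conj_mono[OF gPS, of "inv g"] conj_inv_conj[OF g Pc] by simp
    then have "y \<in> conjugate G (inv g) S" using IS_sub[OF S'] y(1) by blast
    then have "z \<in> conjugate G g (conjugate G (inv g) S)" using y(2) unfolding conj_img[OF g] by blast
    then show "z \<in> S" using conj_conj_inv[OF g Sc] by simp
  qed
qed

lemma IS_conj:
  assumes g: "g \<in> carrier G" and P: "is_p_subgroup G p P"
  shows "IS G p (conjugate G g P) = conjugate G g (IS G p P)"
proof
  show "conjugate G g (IS G p P) \<subseteq> IS G p (conjugate G g P)" using IS_conj_sub[OF g P] .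
  have ig: "inv g \<in> carrier G" using g by simp
  have gP: "is_p_subgroup G p (conjugate G g P)" using conj_p_sub[OF g P] .
  have Pc: "P \<subseteq> carrier G" using P subgroup.subset unfolding is_p_subgroup_def by blast
  have "conjugate G (inv g) (IS G p (conjugate G g P)) \<subseteq> IS G p P"
    using IS_conj_sub[OF ig gP] conj_inv_conj[OF g Pc] by simp
  then have "conjugate G g (conjugate G (inv g) (IS G p (conjugate G g P))) \<subseteq> conjugate G g (IS G p P)"
    by (rule conj_mono)
  then show "IS G p (conjugate G g P) \<subseteq> conjugate G g (IS G p P)"
    using conj_conj_inv[OF g IS_basic(2)[OF gP]] by simp
qed

lemma IS_normal_closed:
  assumes P: "is_p_subgroup G p P" and x: "x \<in> normalizer G P" and h: "h \<in> IS G p P"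
  shows "x \<otimes> h \<otimes> inv x \<in> IS G p P"
proof -
  have Pc: "P \<subseteq> carrier G" using P subgroup.subset unfolding is_p_subgroup_def by blast
  have xc: "x \<in> carrier G" and xP: "conjugate G x P = P" using x normalizer_iff[OF Pc] by auto
  have ixP: "conjugate G (inv x) P = P" using conj_inv_conj[OF xc Pc] xP by simp
  have "x \<otimes> h \<otimes> inv x \<in> conjugate G x (IS G p P)" using h unfolding conj_img[OF xc] by blast
  also have "\<dots> \<subseteq> IS G p (conjugate G x P)" using IS_conj_sub[OF xc P] .
  finally show ?thesis using xP by simp
qed

lemma normal_sub_IS:
  assumes P: "is_p_subgroup G p P" and Q: "is_p_subgroup G p Q"
    and nQ: "Q \<lhd> (G\<lparr>carrier := normalizer G P\<rparr>)"
  shows "Q \<subseteq> IS G p P"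
proof -
  have Pc: "P \<subseteq> carrier G" using P subgroup.subset unfolding is_p_subgroup_def by blast
  define N where "N = normalizer G P"
  have Ns: "subgroup N G" unfolding N_def using normalizer_imp_subgroup[OF Pc] .
  interpret NG: group "G\<lparr>carrier := N\<rparr>" using subgroup_imp_group[OF Ns] .
  have nQ': "subgroup Q (G\<lparr>carrier := N\<rparr>) \<and> (\<forall>x\<in>N. \<forall>h\<in>Q. x \<otimes> h \<otimes> inv\<^bsub>G\<lparr>carrier := N\<rparr>\<^esub> x \<in> Q)"
    using nQ NG.normal_inv_iff unfolding N_def by simp
  have QN: "Q \<subseteq> N" using subgroup.subset[OF conjunct1[OF nQ']] by simp
  have conjQ: "x \<otimes> h \<otimes> inv x \<in> Q" if "x \<in> N" "h \<in> Q" for x h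
    using nQ' that m_inv_consistent[OF Ns that(1)] by auto
  show ?thesis unfolding IS_def
  proof (rule Inter_greatest)
    fix S assume "S \<in> {S. sylow_p_subgroup G p S \<and> P \<subseteq> S}"
    then have S: "sylow_p_subgroup G p S" and PS: "P \<subseteq> S" by auto
    have SN: "S \<subseteq> N" unfolding N_def using sylow_normalizes[OF S PS] .
    have Ss: "subgroup S G" using S by (simp add: sylow_p_subgroup_def)
    have cS: "card S = p ^ multiplicity p (card N)" using sylow_in_sub[OF p fin Ns S SN] .
    obtain T where T: "subgroup T G" "Q \<subseteq> T" "T \<subseteq> N" "card T = p ^ multiplicity p (card N)"
      using sub_sylow_containing[OF p fin Ns Q QN] by blast
    obtain x where x: "x \<in> N" "conjugate G x T = S"
      using sub_sylow_conjugate[OF p fin Ns T(1,3,4) Ss SN cS] by blast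
    have xc: "x \<in> carrier G" using x(1) subgroup.subset[OF Ns] by blast
    show "Q \<subseteq> S"
    proof
      fix q assume q: "q \<in> Q"
      have qc: "q \<in> carrier G" using q QN subgroup.subset[OF Ns] by blast
      have ixN: "inv x \<in> N" using subgroup.m_inv_closed[OF Ns x(1)] .
      have "inv x \<otimes> q \<otimes> inv (inv x) \<in> Q" using conjQ[OF ixN q] .
      then have "inv x \<otimes> q \<otimes> x \<in> T" using T(2) xc by auto
      then have "x \<otimes> (inv x \<otimes> q \<otimes> x) \<otimes> inv x \<in> conjugate G x T" unfolding conj_img[OF xc] by blast
      moreover have "x \<otimes> (inv x \<otimes> q \<otimes> x) \<otimes> inv x = q" using xc qc by (simp add: m_assoc inv_cancel_left'')
      ultimately show "q \<in> S" using x(2) by simp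
    qed
  qed
qed

lemma Op_eq_IS:
  assumes P: "is_p_subgroup G p P"
  shows "Op G p (normalizer G P) = IS G p P"
proof -
  have Pc: "P \<subseteq> carrier G" using P subgroup.subset unfolding is_p_subgroup_def by blast
  define N where "N = normalizer G P"
  have Ns: "subgroup N G" unfolding N_def using normalizer_imp_subgroup[OF Pc] .
  interpret NG: group "G\<lparr>carrier := N\<rparr>" using subgroup_imp_group[OF Ns] .
  have ISp: "is_p_subgroup G p (IS G p P)" using IS_basic(1)[OF P] .
  have ISs: "subgroup (IS G p P) G" using ISp by (simp add: is_p_subgroup_def)
  have ISN: "IS G p P \<subseteq> N" unfolding N_def using IS_norm[OF P] .
  have nIS: "IS G p P \<lhd> (G\<lparr>carrier := N\<rparr>)"
  proof -
    have "subgroup (IS G p P) (G\<lparr>carrier := N\<rparr>)" using subgroup_incl[OF ISs Ns ISN] .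
    moreover have "\<forall>x\<in>carrier (G\<lparr>carrier := N\<rparr>). \<forall>h\<in>IS G p P.
        x \<otimes>\<^bsub>G\<lparr>carrier := N\<rparr>\<^esub> h \<otimes>\<^bsub>G\<lparr>carrier := N\<rparr>\<^esub> inv\<^bsub>G\<lparr>carrier := N\<rparr>\<^esub> x \<in> IS G p P"
      using IS_normal_closed[OF P] m_inv_consistent[OF Ns] unfolding N_def by simp
    ultimately show ?thesis using NG.normal_inv_iff by blast
  qed
  have "(THE Q. is_p_subgroup G p Q \<and> Q \<lhd> (G\<lparr>carrier := N\<rparr>) \<and>
       (\<forall>Q'. is_p_subgroup G p Q' \<and> Q' \<lhd> (G\<lparr>carrier := N\<rparr>) \<longrightarrow> Q' \<subseteq> Q)) = IS G p P"
  proof (rule the_equality)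
    show "is_p_subgroup G p (IS G p P) \<and> IS G p P \<lhd> (G\<lparr>carrier := N\<rparr>) \<and>
       (\<forall>Q'. is_p_subgroup G p Q' \<and> Q' \<lhd> (G\<lparr>carrier := N\<rparr>) \<longrightarrow> Q' \<subseteq> IS G p P)"
      using ISp nIS normal_sub_IS[OF P] unfolding N_def by blast
  next
    fix Q assume "is_p_subgroup G p Q \<and> Q \<lhd> (G\<lparr>carrier := N\<rparr>) \<and>
       (\<forall>Q'. is_p_subgroup G p Q' \<and> Q' \<lhd> (G\<lparr>carrier := N\<rparr>) \<longrightarrow> Q' \<subseteq> Q)"
    then have "Q \<subseteq> IS G p P" "IS G p P \<subseteq> Q"
      using normal_sub_IS[OF P] ISp nIS unfolding N_def by blast+
    then show "Q = IS G p P" by blast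
  qed
  then show ?thesis unfolding Op_def N_def .
qed

end

end


context group begin

context
  fixes p assumes p: "prime p" and fin: "finite (carrier G)" and dvd: "p dvd order G"
    and ab: "\<And>S. sylow_p_subgroup G p S \<Longrightarrow> \<forall>x\<in>S. \<forall>y\<in>S. x \<otimes> y = y \<otimes> x"
begin

lemma Bp_char: "P \<in> Bp G p \<longleftrightarrow> P \<in> Sp G p \<and> IS G p P = P"
proof -
  have "P \<in> Sp G p \<Longrightarrow> Op G p (normalizer G P) = IS G p P"
    using Op_eq_IS[OF p fin ab] unfolding Sp_def by blast
  then show ?thesis unfolding Bp_def by auto
qed

lemma IS_Sp:
  assumes P: "P \<in> Sp G p"
  shows "IS G p P \<in> Sp G p"
proof -
  have Pp: "is_p_subgroup G p P" and nt: "P \<noteq> {\<one>}" using P by (auto simp: Sp_def)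
  have Ps: "subgroup P G" using Pp by (simp add: is_p_subgroup_def)
  have "IS G p P \<noteq> {\<one>}"
  proof
    assume "IS G p P = {\<one>}"
    then have "P \<subseteq> {\<one>}" using IS_ge[where P=P and p=p] by simp
    then show False using nt subgroup.one_closed[OF Ps] by blast
  qed
  then show ?thesis using IS_basic(1)[OF p fin ab Pp] by (simp add: Sp_def)
qed

lemma IS_Bp: "P \<in> Sp G p \<Longrightarrow> IS G p P \<in> Bp G p"
  using IS_Sp IS_idem Bp_char by blast

lemma Bp_sdr: "strong_deformation_retract (subgroup_space (Sp G p)) (Bp G p)"
  unfolding strong_deformation_retract_def subgroup_space_def topspace_poset
proof (intro conjI exI[of _ "IS G p"])
  show "Bp G p \<subseteq> Sp G p" unfolding Bp_def by blast
  have c: "continuous_map (poset_topology (Sp G p) (\<subseteq>)) (poset_topology (Sp G p) (\<subseteq>)) (IS G p)"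
  proof (rule continuous_poset)
    fix x assume "x \<in> Sp G p" then show "IS G p x \<in> Sp G p" by (rule IS_Sp)
  next
    fix x y assume xy: "x \<in> Sp G p" "y \<in> Sp G p" "x \<subseteq> y" then show "IS G p x \<subseteq> IS G p y" by (intro IS_mono[OF xy(3)])
  qed
  show "continuous_map (poset_topology (Sp G p) (\<subseteq>))
     (subtopology (poset_topology (Sp G p) (\<subseteq>)) (Bp G p)) (IS G p)"
    by (rule continuous_map_into_subtopology[OF c]) (auto simp: topspace_poset intro: IS_Bp)
  show "\<forall>x\<in>Bp G p. IS G p x = x" using Bp_char by blast
  show "homotopic_with (\<lambda>h. \<forall>x\<in>Bp G p. h x = x) (poset_topology (Sp G p) (\<subseteq>))
     (poset_topology (Sp G p) (\<subseteq>)) id (IS G p)"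
  proof (rule homotopic_poset_le)
    fix x assume "x \<in> Sp G p"
    then show "id x \<in> Sp G p" "IS G p x \<in> Sp G p" "id x \<subseteq> IS G p x" by (simp_all add: IS_Sp IS_ge)
  next
    fix x y assume "x \<in> Sp G p" "y \<in> Sp G p" "x \<subseteq> y"
    then show "id x \<subseteq> id y" "IS G p x \<subseteq> IS G p y" by (simp_all add: IS_mono)
  next
    show "\<forall>x\<in>Bp G p. id x = x" by simp
    show "\<forall>x\<in>Bp G p. IS G p x = x" using Bp_char by blast
  qed
qed

lemma Bp_closed: "conj_closed (Bp G p)"
  unfolding conj_closed_def
proof (intro conjI ballI)
  fix Q assume "Q \<in> Bp G p"
  then have Qs: "subgroup Q G" by (simp add: Bp_def Sp_def is_p_subgroup_def)
  show "Q \<subseteq> carrier G" using subgroup.subset[OF Qs] .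
  show "Q \<noteq> {}" using subgroup.one_closed[OF Qs] by blast
next
  fix g Q assume g: "g \<in> carrier G" and Q: "Q \<in> Bp G p"
  have QS: "Q \<in> Sp G p" and IQ: "IS G p Q = Q" using Q Bp_char by auto
  have Qp: "is_p_subgroup G p Q" using QS by (simp add: Sp_def)
  have "IS G p (conjugate G g Q) = conjugate G g Q" using IS_conj[OF p fin ab g Qp] IQ by simp
  then show "conjugate G g Q \<in> Bp G p" using Sp_conj[OF g QS] Bp_char by blast
qed

lemma contr_Bp: "contractible_space (orbit_space G (Bp G p))"
proof -
  obtain S where S: "sylow_p_subgroup G p S" using sylow_exists[OF p fin] by blast
  have SSp: "S \<in> Sp G p" using sylow_in_Sp[OF p fin dvd S] .
  have "IS G p S = S" using IS_sub[OF S subset_refl] IS_ge[where P=S and p=p] by blast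
  then have SB: "S \<in> Bp G p" using SSp Bp_char by blast
  have intoE: "\<exists>g\<in>carrier G. conjugate G g Q \<subseteq> S" if Q: "Q \<in> Bp G p" for Q
  proof -
    have Qp: "is_p_subgroup G p Q" using Q by (simp add: Bp_def Sp_def)
    show ?thesis using sylow_conj_into[OF p fin S Qp] .
  qed
  have fus: "\<exists>n\<in>carrier G. conjugate G n S = S \<and> (\<forall>Q. Q \<subseteq> M \<longrightarrow> conjugate G n Q = conjugate G g Q)"
    if "M \<in> Bp G p" "M \<subseteq> S" "g \<in> carrier G" "conjugate G g M \<subseteq> S" for M g
  proof (rule fusion[OF p fin _ _ _ _ _ that(2-4), where Phi = "\<lambda>T. T"])
    show "is_p_subgroup G p S" using sylow_is_p[OF S] .
    show "\<forall>x\<in>S. \<forall>y\<in>S. x \<otimes> y = y \<otimes> x" using ab[OF S] .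
  next
    fix T assume "is_p_subgroup G p T" "S \<subseteq> T"
    then show "T = S" using sylow_maximal[OF p fin S] by blast
  next
    fix T assume T: "is_p_subgroup G p T"
    show "T \<subseteq> carrier G" using T subgroup.subset unfolding is_p_subgroup_def by blast
  qed simp
  interpret A: orb_setup G "Bp G p" "Bp G p" "\<lambda>Q. Q" S
    by (unfold_locales) (auto simp: fin Bp_closed SB intro: intoE fus)
  show ?thesis by (rule A.orbit_contractible)
qed

end

end

theorem proposition5p1:
  fixes G :: "('g, 'b) monoid_scheme" and p :: nat
  assumes "group G" and "finite (carrier G)" and "prime p" and "p dvd order G"
  shows "(strong_deformation_retract (subgroup_space (Sp G p)) (Ap G p) \<longrightarrow>
            contractible_space (orbit_space G (Ap G p)) \<and>
            contractible_space (orbit_space G (Sp G p)))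
       \<and> ((\<forall>P. sylow_p_subgroup G p P \<longrightarrow> (\<forall>x\<in>P. \<forall>y\<in>P. x \<otimes>\<^bsub>G\<^esub> y = y \<otimes>\<^bsub>G\<^esub> x)) \<longrightarrow>
            contractible_space (orbit_space G (Ap G p)) \<and>
            contractible_space (orbit_space G (Sp G p)) \<and>
            strong_deformation_retract (subgroup_space (Sp G p)) (Bp G p) \<and>
            contractible_space (orbit_space G (Bp G p)))"
proof -
  interpret group G by (rule assms(1))
  note p = assms(3) and fin = assms(2) and dvd = assms(4)
  show ?thesis
  proof (intro conjI impI)
    assume sdr: "strong_deformation_retract (subgroup_space (Sp G p)) (Ap G p)"
    have "\<And>P. is_p_subgroup G p P \<Longrightarrow> comm_p_elems G p P" using sdr_imp_comm[OF p fin sdr] .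
    from contr_Sp_Ap[OF p fin dvd this]
    show "contractible_space (orbit_space G (Ap G p))" "contractible_space (orbit_space G (Sp G p))"
      by blast+
  next
    assume abA: "\<forall>P. sylow_p_subgroup G p P \<longrightarrow> (\<forall>x\<in>P. \<forall>y\<in>P. x \<otimes>\<^bsub>G\<^esub> y = y \<otimes>\<^bsub>G\<^esub> x)"
    then have ab: "\<And>S. sylow_p_subgroup G p S \<Longrightarrow> \<forall>x\<in>S. \<forall>y\<in>S. x \<otimes>\<^bsub>G\<^esub> y = y \<otimes>\<^bsub>G\<^esub> x" by blast
    have hyp: "comm_p_elems G p P" if P: "is_p_subgroup G p P" for P
    proof -
      obtain S where S: "sylow_p_subgroup G p S" "P \<subseteq> S" using sylow_containing[OF p fin P] by blast
      show ?thesis unfolding comm_p_elems_def using ab[OF S(1)] S(2) by blast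
    qed
    from contr_Sp_Ap[OF p fin dvd hyp]
    show "contractible_space (orbit_space G (Ap G p))" "contractible_space (orbit_space G (Sp G p))"
      by blast+
    show "strong_deformation_retract (subgroup_space (Sp G p)) (Bp G p)" using Bp_sdr[OF p fin dvd ab] .
    show "contractible_space (orbit_space G (Bp G p))" using contr_Bp[OF p fin dvd ab] .
  qed
qed


end
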